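(* Let $T$ be a vertex of $\mathsf{CS}(\lambda)_{\ell(\lambda)}$, let $b\in B(\lambda)_{\ell(\lambda)}$ be the tableau obtained from $T$ by replacing every entry of $\alpha^{(k)}$ by $k$ for all $k$, where $\alpha=\mathsf{Des}(T)$. Suppose $T\xrightarrow{I}T'$ is an edge of $\mathsf{CS}(\lambda)_{\ell(\lambda)}$ with $I\subseteq\alpha^{(i)}\cup\alpha^{(i+1)}$. Then $$\varphi_i(b)=\min I-\min\alpha^{(i)}+1\quad\text{and}\quad\varepsilon_i(b)=\max\alpha^{(i+1)}-\max I.$$
   Context: French notation; $|\lambda|=N$; $\ell(\lambda)$ is the number of parts of $\lambda$. $\mathsf{SYT}(\lambda)$ standard tableaux; $\mathsf{SSYT}(\lambda)_n$ semistandard tableaux with entries in $[n]$; $\mathsf{row}(b)$ reads rows left to right from top row to bottom row; $\mathsf{std}$ replaces the $a_j$ entries $j$, in reading order, by $a_1+\dots+a_{j-1}+1,\dots,a_1+\dots+a_j$. Crystal operators on $B(\lambda)_n=\mathsf{SSYT}(\lambda)_n$: in the subword of $\mathsf{row}(b)$ of letters $i,i+1$, bracket each $i+1$ with an unbracketed $i$ to its right (parenthesis matching); $f_i$ changes the rightmost unbracketed $i$ to $i+1$ and $e_i$ the leftmost unbracketed $i+1$ to $i$ (giving $\emptyset$ if there is none). String lengths: $\varphi_i(b)=\max\{k\ge0: f_i^k(b)\ne\emptyset\}$, $\varepsilon_i(b)=\max\{k\ge0:e_i^k(b)\ne\emptyset\}$. For a permutation $\pi$ of $[N]$ and $I=[i,i+2m]\subseteq[N]$,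 $m\ge1$, $I$ is a Dyck pattern interval of $\pi$ if the RSK insertion tableau of the subword $\pi|_I$ has bottom row $i,\dots,i+m$ and top row $i+m+1,\dots,i+2m$; a Dyck pattern interval of $T$ is one of $\mathsf{row}(T)$. The crystal skeleton $\mathsf{CS}(\lambda)$ is the directed graph on $\mathsf{SYT}(\lambda)$ with, for each Dyck pattern interval $I=[i,i+2m]$ of $T$, an edge $T\xrightarrow{I}\mathsf{std}(f_i(c))$, $c$ obtained from $T$ by replacing entries $i,\dots,i+m$ by $i$ and $i+m+1,\dots,i+2m$ by $i+1$. Descent composition: $d$ is a descent of $T$ if $d+1$ lies in a strictly higher row; for descents $d_1<\dots<d_k$, $\mathsf{Des}(T)=(d_1,d_2-d_1,\dots,N-d_k)$; $\alpha^{(j)}=\{\alpha_1+\dots+\alpha_{j-1}+1,\dots,\alpha_1+\dots+\alpha_j\}$. $\mathsf{CS}(\lambda)_{\ell(\lambda)}$ is the induced subgraph of $\mathsf{CS}(\lambda)$ on the vertices $T$ such that $\mathsf{Des}(T)$ has exactly $\ell(\lambda)$ parts. *)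

theory Defs
  imports Main
begin

text \<open>A partition is a weakly decreasing list of positive integers.
A tableau is a list of rows, the first row being the bottom (longest) row.\<close>

definition partition :: "nat list \<Rightarrow> bool" where
  "partition lam \<longleftrightarrow> (\<forall>x\<in>set lam. 0 < x) \<and> sorted_wrt (\<ge>) lam"

definition shape :: "nat list list \<Rightarrow> nat list" where
  "shape T = map length T"

definition row_word :: "nat list list \<Rightarrow> nat list" where
  "row_word T = concat (rev T)"

fun chunks :: "nat list \<Rightarrow> 'a list \<Rightarrow> 'a list list" where
  "chunks [] w = []"
| "chunks (n # ns) w = take n w # chunks ns (drop n w)"

definition reshape :: "nat list \<Rightarrow> nat list \<Rightarrow> nat list list" where
  "reshape lam w = rev (chunks (rev lam) w)"

definition cols_strict :: "nat list list \<Rightarrow> bool" where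
  "cols_strict T \<longleftrightarrow> (\<forall>r c. Suc r < length T \<and> c < length (T ! Suc r) \<longrightarrow>
      c < length (T ! r) \<and> T ! r ! c < T ! Suc r ! c)"

definition SSYT :: "nat list \<Rightarrow> nat \<Rightarrow> nat list list set" where
  "SSYT lam n = {T. shape T = lam \<and> (\<forall>r\<in>set T. sorted r) \<and> cols_strict T
                  \<and> set (row_word T) \<subseteq> {1..n}}"

definition SYT :: "nat list \<Rightarrow> nat list list set" where
  "SYT lam = {T. shape T = lam \<and> (\<forall>r\<in>set T. sorted_wrt (<) r) \<and> cols_strict T
                \<and> distinct (row_word T) \<and> set (row_word T) = {1..sum_list lam}}"

text \<open>Scan the word left to right; letters \<open>i+1\<close> are opening brackets, letters \<open>i\<close> closing ones.
Returns (positions of unbracketed \<open>i\<close>, increasing; positions of unbracketed \<open>i+1\<close>, decreasing).\<close>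
fun brk_aux :: "nat \<Rightarrow> nat \<Rightarrow> nat list \<Rightarrow> nat list \<Rightarrow> nat list \<Rightarrow> nat list \<times> nat list" where
  "brk_aux i k [] us st = (us, st)"
| "brk_aux i k (x # xs) us st =
     (if x = Suc i then brk_aux i (Suc k) xs us (k # st)
      else if x = i then
        (case st of [] \<Rightarrow> brk_aux i (Suc k) xs (us @ [k]) st
                  | _ # st' \<Rightarrow> brk_aux i (Suc k) xs us st')
      else brk_aux i (Suc k) xs us st)"

definition brk :: "nat \<Rightarrow> nat list \<Rightarrow> nat list \<times> nat list" where
  "brk i w = brk_aux i 0 w [] []"

definition word_f :: "nat \<Rightarrow> nat list \<Rightarrow> nat list option" where
  "word_f i w = (let us = fst (brk i w) in
     if us = [] then None else Some (w[last us := Suc i]))"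

definition word_e :: "nat \<Rightarrow> nat list \<Rightarrow> nat list option" where
  "word_e i w = (let st = snd (brk i w) in
     if st = [] then None else Some (w[last st := i]))"

definition tab_f :: "nat \<Rightarrow> nat list list \<Rightarrow> nat list list option" where
  "tab_f i T = map_option (reshape (shape T)) (word_f i (row_word T))"

definition tab_e :: "nat \<Rightarrow> nat list list \<Rightarrow> nat list list option" where
  "tab_e i T = map_option (reshape (shape T)) (word_e i (row_word T))"

definition iter_op :: "('a \<Rightarrow> 'a option) \<Rightarrow> nat \<Rightarrow> 'a \<Rightarrow> 'a option" where
  "iter_op g k b = ((\<lambda>z. Option.bind z g) ^^ k) (Some b)"

definition phi :: "nat \<Rightarrow> nat list list \<Rightarrow> nat" where
  "phi i b = (GREATEST k. iter_op (tab_f i) k b \<noteq> None)"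

definition eps :: "nat \<Rightarrow> nat list list \<Rightarrow> nat" where
  "eps i b = (GREATEST k. iter_op (tab_e i) k b \<noteq> None)"

definition std_word :: "nat list \<Rightarrow> nat list" where
  "std_word w = map (\<lambda>p. length (filter (\<lambda>x. x < w ! p) w)
                        + length (filter (\<lambda>x. x = w ! p) (take (Suc p) w))) [0..<length w]"

definition std :: "nat list list \<Rightarrow> nat list list" where
  "std T = reshape (shape T) (std_word (row_word T))"

fun row_ins :: "nat \<Rightarrow> nat list list \<Rightarrow> nat list list" where
  "row_ins x [] = [[x]]"
| "row_ins x (r # rs) =
     (let a = takeWhile (\<lambda>y. y \<le> x) r; b = dropWhile (\<lambda>y. y \<le> x) r in
      if b = [] then (r @ [x]) # rs else (a @ x # tl b) # row_ins (hd b) rs)"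

definition insertion_tableau :: "nat list \<Rightarrow> nat list list" where
  "insertion_tableau w = foldl (\<lambda>P x. row_ins x P) [] w"

definition dyck_pattern :: "nat list \<Rightarrow> nat \<Rightarrow> nat \<Rightarrow> bool" where
  "dyck_pattern w i m \<longleftrightarrow> 1 \<le> m \<and> 1 \<le> i \<and> i + 2 * m \<le> length w \<and>
     insertion_tableau (filter (\<lambda>x. x \<in> {i..i + 2 * m}) w)
       = [[i..<i + m + 1], [i + m + 1..<i + 2 * m + 1]]"

definition dyck_collapse :: "nat \<Rightarrow> nat \<Rightarrow> nat list list \<Rightarrow> nat list list" where
  "dyck_collapse i m T = map (map (\<lambda>x. if i \<le> x \<and> x \<le> i + m then i
        else if i + m + 1 \<le> x \<and> x \<le> i + 2 * m then i + 1 else x)) T"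

definition cs_edge :: "nat list \<Rightarrow> nat list list \<Rightarrow> nat set \<Rightarrow> nat list list \<Rightarrow> bool" where
  "cs_edge lam T I T' \<longleftrightarrow> T \<in> SYT lam \<and>
     (\<exists>i m. I = {i..i + 2 * m} \<and> dyck_pattern (row_word T) i m \<and>
        (\<exists>c'. tab_f i (dyck_collapse i m T) = Some c' \<and> T' = std c'))"

definition rowof :: "nat list list \<Rightarrow> nat \<Rightarrow> nat" where
  "rowof T v = (THE r. r < length T \<and> v \<in> set (T ! r))"

definition descents :: "nat list list \<Rightarrow> nat set" where
  "descents T = {d. 1 \<le> d \<and> d < length (row_word T) \<and> rowof T d < rowof T (d + 1)}"

definition Des :: "nat list list \<Rightarrow> nat list" where
  "Des T = (let bs = 0 # sorted_list_of_set (descents T) @ [length (row_word T)]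
            in map (\<lambda>(a, b). b - a) (zip bs (tl bs)))"

text \<open>\<open>\<alpha>\<^sup>(\<^sup>j\<^sup>)\<close>, 1-indexed.\<close>
definition comp_block :: "nat list \<Rightarrow> nat \<Rightarrow> nat set" where
  "comp_block \<alpha> j = {sum_list (take (j - 1) \<alpha>) + 1 .. sum_list (take j \<alpha>)}"

definition blockof :: "nat list \<Rightarrow> nat \<Rightarrow> nat" where
  "blockof \<alpha> x = (LEAST k. 1 \<le> k \<and> x \<in> comp_block \<alpha> k)"

definition CS_vert :: "nat list \<Rightarrow> nat list list set" where
  "CS_vert lam = {T \<in> SYT lam. length (Des T) = length lam}"

definition CS_edge :: "nat list \<Rightarrow> nat list list \<Rightarrow> nat set \<Rightarrow> nat list list \<Rightarrow> bool" where
  "CS_edge lam T I T' \<longleftrightarrow> T \<in> CS_vert lam \<and> T' \<in> CS_vert lam \<and> cs_edge lam T I T'"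

end

theory Submission
  imports Defs
begin

definition bstep :: "nat \<Rightarrow> nat \<Rightarrow> nat \<Rightarrow> nat list \<times> nat list \<Rightarrow> nat list \<times> nat list" where
  "bstep i k x s = (case s of (us, st) \<Rightarrow>
     (if x = Suc i then (us, k # st) else if x = i then
        (case st of [] \<Rightarrow> (us @ [k], st) | _ # st' \<Rightarrow> (us, st')) else (us, st)))"

lemma brk_aux_append:
  "brk_aux i k (xs @ ys) us st = (case brk_aux i k xs us st of (us', st') \<Rightarrow> brk_aux i (k + length xs) ys us' st')"
  by (induction xs arbitrary: k us st) (auto split: list.splits)

lemma brk_aux_single: "brk_aux i k [x] us st = bstep i k x (us, st)"
  by (auto simp: bstep_def split: list.splits)

lemma brk_snoc: "brk i (xs @ [x]) = bstep i (length xs) x (brk i xs)"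
proof -
  obtain a b where ab: "brk_aux i 0 xs [] [] = (a, b)" by fastforce
  show ?thesis unfolding brk_def brk_aux_append ab by (simp only: brk_aux_single prod.case) simp
qed

lemma brk_aux_us:
  "brk_aux i k xs us st = (us @ fst (brk_aux i k xs [] st), snd (brk_aux i k xs [] st))"
proof (induction xs arbitrary: k us st)
  case Nil then show ?case by simp
next
  case (Cons x xs)
  show ?case
  proof (cases "x = Suc i")
    case True then show ?thesis using Cons.IH[of "Suc k" us "k # st"] by simp
  next
    case F: False
    show ?thesis
    proof (cases "x = i")
      case True
      show ?thesis
      proof (cases st)
        case Nil
        then show ?thesis using True F Cons.IH[of "Suc k" "us @ [k]" "[]"] Cons.IH[of "Suc k" "[k]" "[]"] by simp
      next
        case (Cons y st')
        then show ?thesis using True F Cons.IH[of "Suc k" us st'] by simp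
      qed
    next
      case False
      then show ?thesis using F Cons.IH[of "Suc k" us st] by simp
    qed
  qed
qed

lemma brk_aux_us_range: "set (fst (brk_aux i k xs [] st)) \<subseteq> {k..<k + length xs}"
proof (induction xs arbitrary: k st)
  case Nil then show ?case by simp
next
  case (Cons x xs)
  have A: "\<And>st. set (fst (brk_aux i (Suc k) xs [] st)) \<subseteq> {k..<k + length (x # xs)}"
    using Cons.IH by fastforce
  show ?case
  proof (cases "x = Suc i")
    case True then show ?thesis using A by simp
  next
    case F: False
    show ?thesis
    proof (cases "x = i")
      case True
      show ?thesis
      proof (cases st)
        case Nil
        have "brk_aux i (Suc k) xs [k] [] = ([k] @ fst (brk_aux i (Suc k) xs [] []), snd (brk_aux i (Suc k) xs [] []))"
          by (rule brk_aux_us)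
        then show ?thesis using True F Nil A[of "[]"] by simp
      next
        case (Cons y st')
        then show ?thesis using True F A by simp
      qed
    next
      case False
      then show ?thesis using F A by simp
    qed
  qed
qed

lemma brk_aux_st_shape:
  "\<exists>Y d. snd (brk_aux i k xs us st) = Y @ drop d st \<and> set Y \<subseteq> {k..<k + length xs}"
proof (induction xs arbitrary: k us st)
  case Nil then show ?case by (rule exI[of _ "[]"], rule exI[of _ 0]) simp
next
  case (Cons x xs)
  show ?case
  proof (cases "x = Suc i")
    case True
    obtain Y d where Yd: "snd (brk_aux i (Suc k) xs us (k # st)) = Y @ drop d (k # st)"
      "set Y \<subseteq> {Suc k..<Suc k + length xs}" using Cons.IH by blast
    show ?thesis
    proof (cases d)
      case 0
      then show ?thesis using True Yd
        by (intro exI[of _ "Y @ [k]"] exI[of _ 0]) auto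
    next
      case (Suc d')
      then show ?thesis using True Yd
        by (intro exI[of _ Y] exI[of _ d']) auto
    qed
  next
    case F: False
    show ?thesis
    proof (cases "x = i")
      case True
      show ?thesis
      proof (cases st)
        case Nil
        obtain Y d where Yd: "snd (brk_aux i (Suc k) xs (us @ [k]) []) = Y @ drop d []"
          "set Y \<subseteq> {Suc k..<Suc k + length xs}" using Cons.IH by blast
        then show ?thesis using True F Nil by (intro exI[of _ Y] exI[of _ 0]) auto
      next
        case (Cons y st')
        obtain Y d where Yd: "snd (brk_aux i (Suc k) xs us st') = Y @ drop d st'"
          "set Y \<subseteq> {Suc k..<Suc k + length xs}" using Cons.IH by blast
        then show ?thesis using True F Cons by (intro exI[of _ Y] exI[of _ "Suc d"]) auto
      qed
    next
      case False
      obtain Y d where Yd: "snd (brk_aux i (Suc k) xs us st) = Y @ drop d st"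
        "set Y \<subseteq> {Suc k..<Suc k + length xs}" using Cons.IH by blast
      then show ?thesis using F False by (intro exI[of _ Y] exI[of _ d]) auto
    qed
  qed
qed

lemma brk_aux_extra:
  assumes "z < k"
  shows "(fst (brk_aux i k xs us st) = us \<longrightarrow>
            brk_aux i k xs us (st @ [z]) = (us, snd (brk_aux i k xs us st) @ [z])) \<and>
         (fst (brk_aux i k xs us st) \<noteq> us \<longrightarrow> z \<notin> set (snd (brk_aux i k xs us (st @ [z]))))"
  using assms
proof (induction xs arbitrary: k us st)
  case Nil then show ?case by simp
next
  case (Cons x xs)
  have zk: "z < Suc k" using Cons.prems by simp
  show ?case
  proof (cases "x = Suc i")
    case True then show ?thesis using Cons.IH[OF zk, of us "k # st"] by simp
  next
    case F: False
    show ?thesis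
    proof (cases "x = i")
      case True
      show ?thesis
      proof (cases st)
        case Nil
        have ne: "fst (brk_aux i (Suc k) xs (us @ [k]) []) \<noteq> us"
          using brk_aux_us[of i "Suc k" xs "us @ [k]" "[]"] by auto
        obtain Y d where Yd: "snd (brk_aux i (Suc k) xs us []) = Y @ drop d []"
          "set Y \<subseteq> {Suc k..<Suc k + length xs}" using brk_aux_st_shape by blast
        have "z \<notin> set (snd (brk_aux i (Suc k) xs us []))" using Yd Cons.prems by auto
        then show ?thesis using True F Nil ne by simp
      next
        case (Cons y st')
        then show ?thesis using True F Cons.IH[OF zk, of us st'] by simp
      qed
    next
      case False
      then show ?thesis using F Cons.IH[OF zk, of us st] by simp
    qed
  qed
qed

lemma brk_split:
  assumes "k0 < length w"
  shows "brk i w = (case brk i (take k0 w) of (U0, S0) \<Rightarrow>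
           (case bstep i k0 (w ! k0) (U0, S0) of (U1, S1) \<Rightarrow> brk_aux i (Suc k0) (drop (Suc k0) w) U1 S1))"
proof -
  have w: "w = take k0 w @ ([w ! k0] @ drop (Suc k0) w)" using assms
    by (simp add: id_take_nth_drop)
  obtain U0 S0 where u0: "brk_aux i 0 (take k0 w) [] [] = (U0, S0)" by fastforce
  obtain U1 S1 where u1: "bstep i k0 (w ! k0) (U0, S0) = (U1, S1)" by fastforce
  have "brk i w = brk_aux i 0 (take k0 w @ ([w ! k0] @ drop (Suc k0) w)) [] []"
    unfolding brk_def using w by metis
  also have "\<dots> = brk_aux i k0 ([w ! k0] @ drop (Suc k0) w) U0 S0"
    unfolding brk_aux_append u0 using assms by simp
  also have "\<dots> = brk_aux i (Suc k0) (drop (Suc k0) w) U1 S1"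
    unfolding brk_aux_append brk_aux_single u1 by simp
  finally have "brk i w = brk_aux i (Suc k0) (drop (Suc k0) w) U1 S1" .
  then show ?thesis using u0 u1 by (simp add: brk_def)
qed

lemma brk_take_Suc:
  assumes "k0 < length w"
  shows "brk i (take (Suc k0) w) = bstep i k0 (w ! k0) (brk i (take k0 w))"
proof -
  have "take (Suc k0) w = take k0 w @ [w ! k0]" using assms by (simp add: take_Suc_conv_app_nth)
  then show ?thesis using brk_snoc[of i "take k0 w" "w ! k0"] assms by simp
qed

lemma brk_us_range: "set (fst (brk i w)) \<subseteq> {0..<length w}"
  using brk_aux_us_range[of i 0 w "[]"] unfolding brk_def by simp

lemma brk_st_range: "set (snd (brk i w)) \<subseteq> {0..<length w}"
  using brk_aux_st_shape[of i 0 w "[]" "[]"] unfolding brk_def by auto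

lemma f_struct:
  assumes ne: "fst (brk i w) \<noteq> []" and k0: "k0 = last (fst (brk i w))"
  shows "k0 < length w \<and> w ! k0 = i \<and> brk i (take (Suc k0) w) = (fst (brk i w), [])
         \<and> fst (brk i (w[k0 := Suc i])) = butlast (fst (brk i w))"
proof -
  have k0in: "k0 \<in> set (fst (brk i w))" using ne k0 by simp
  then have kl: "k0 < length w" using brk_us_range by fastforce
  obtain U0 S0 where u0: "brk i (take k0 w) = (U0, S0)" by fastforce
  have U0r: "set U0 \<subseteq> {0..<k0}" using brk_us_range[of i "take k0 w"] u0 kl by simp
  obtain U1 S1 where u1: "bstep i k0 (w ! k0) (U0, S0) = (U1, S1)" by fastforce
  define suf where "suf = drop (Suc k0) w"
  have main: "brk i w = brk_aux i (Suc k0) suf U1 S1"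
    using brk_split[OF kl, of i] u0 u1 suf_def by simp
  define X where "X = fst (brk_aux i (Suc k0) suf [] S1)"
  have fw: "fst (brk i w) = U1 @ X" using main brk_aux_us[of i "Suc k0" suf U1 S1] X_def by simp
  have Xr: "set X \<subseteq> {Suc k0..<Suc k0 + length suf}" using brk_aux_us_range[of i "Suc k0" suf S1] X_def by simp
  have X0: "X = []"
  proof (rule ccontr)
    assume "X \<noteq> []"
    then have "last (fst (brk i w)) = last X" using fw by simp
    moreover have "last X \<in> set X" using \<open>X \<noteq> []\<close> by simp
    ultimately show False using Xr k0 by fastforce
  qed
  have case_app: "w ! k0 = i \<and> S0 = [] \<and> U1 = U0 @ [k0] \<and> S1 = []"
  proof -
    have lU1: "last U1 = k0" "U1 \<noteq> []" using fw X0 k0 ne by auto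
    show ?thesis
    proof (cases "w ! k0 = Suc i")
      case True
      then have "U1 = U0" using u1 by (simp add: bstep_def)
      then show ?thesis using lU1 U0r by (metis atLeastLessThan_iff last_in_set less_irrefl subsetD)
    next
      case F: False
      show ?thesis
      proof (cases "w ! k0 = i")
        case True
        show ?thesis
        proof (cases S0)
          case Nil then show ?thesis using True F u1 by (simp add: bstep_def)
        next
          case (Cons y S0')
          then have "U1 = U0" using True F u1 by (simp add: bstep_def)
          then show ?thesis using lU1 U0r by (metis atLeastLessThan_iff last_in_set less_irrefl subsetD)
        qed
      next
        case False
        then have "U1 = U0" using F u1 by (simp add: bstep_def)
        then show ?thesis using lU1 U0r by (metis atLeastLessThan_iff last_in_set less_irrefl subsetD)
      qed
    qed
  qed
  have fwU: "fst (brk i w) = U0 @ [k0]" using fw X0 case_app by simp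
  have t1: "brk i (take (Suc k0) w) = (fst (brk i w), [])"
    using brk_take_Suc[OF kl, of i] u0 case_app fwU by (simp add: bstep_def)
  have w': "w[k0 := Suc i] ! k0 = Suc i" "take k0 (w[k0 := Suc i]) = take k0 w"
       "drop (Suc k0) (w[k0 := Suc i]) = suf" "k0 < length (w[k0 := Suc i])"
    using kl suf_def by auto
  have new: "brk i (w[k0 := Suc i]) = brk_aux i (Suc k0) suf U0 [k0]"
    using brk_split[OF w'(4), of i] w' u0 case_app by (simp add: bstep_def)
  have "fst (brk_aux i (Suc k0) suf [] []) = []" using X0 X_def case_app by simp
  then have "fst (brk_aux i (Suc k0) suf U0 []) = U0"
    using brk_aux_us[of i "Suc k0" suf U0 "[]"] by simp
  then have "brk_aux i (Suc k0) suf U0 ([] @ [k0]) = (U0, snd (brk_aux i (Suc k0) suf U0 []) @ [k0])"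
    using brk_aux_extra[of k0 "Suc k0" i suf U0 "[]"] by simp
  then have "fst (brk i (w[k0 := Suc i])) = U0" using new by simp
  then show ?thesis using kl case_app t1 fwU by simp
qed

lemma e_struct:
  assumes ne: "snd (brk i w) \<noteq> []" and s0: "s0 = last (snd (brk i w))"
  shows "s0 < length w \<and> w ! s0 = Suc i \<and> snd (brk i (w[s0 := i])) = butlast (snd (brk i w))"
proof -
  have s0in: "s0 \<in> set (snd (brk i w))" using ne s0 by simp
  then have sl: "s0 < length w" using brk_st_range by fastforce
  obtain U0 S0 where u0: "brk i (take s0 w) = (U0, S0)" by fastforce
  have S0r: "set S0 \<subseteq> {0..<s0}" using brk_st_range[of i "take s0 w"] u0 sl by simp
  obtain U1 S1 where u1: "bstep i s0 (w ! s0) (U0, S0) = (U1, S1)" by fastforce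
  define suf where "suf = drop (Suc s0) w"
  have main: "brk i w = brk_aux i (Suc s0) suf U1 S1"
    using brk_split[OF sl, of i] u0 u1 suf_def by simp
  obtain Y d where Yd: "snd (brk i w) = Y @ drop d S1" "set Y \<subseteq> {Suc s0..<Suc s0 + length suf}"
    using brk_aux_st_shape[of i "Suc s0" suf U1 S1] main by auto
  have s0S1: "s0 \<in> set (drop d S1)" using s0in Yd by auto
  then have "s0 \<in> set S1" by (meson in_set_dropD)
  then have c1: "w ! s0 = Suc i \<and> S1 = s0 # S0 \<and> U1 = U0"
    using u1 S0r by (auto simp: bstep_def split: if_splits list.splits)
  have S00: "S0 = []"
  proof (rule ccontr)
    assume S0ne: "S0 \<noteq> []"
    have "last S0 < s0" using S0r S0ne last_in_set by fastforce
    have dne: "drop d S1 \<noteq> []" using s0S1 by auto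
    then have "last (snd (brk i w)) = last (drop d S1)" using Yd by simp
    also have "\<dots> = last S1" using dne by (simp add: last_drop)
    also have "\<dots> = last S0" using c1 S0ne by simp
    finally show False using s0 \<open>last S0 < s0\<close> by simp
  qed
  have orig: "brk i w = brk_aux i (Suc s0) suf U0 ([] @ [s0])" using main c1 S00 by simp
  have fU0: "fst (brk_aux i (Suc s0) suf U0 []) = U0"
  proof (rule ccontr)
    assume "fst (brk_aux i (Suc s0) suf U0 []) \<noteq> U0"
    then have "s0 \<notin> set (snd (brk_aux i (Suc s0) suf U0 ([] @ [s0])))"
      using brk_aux_extra[of s0 "Suc s0" i suf U0 "[]"] by simp
    then show False using orig s0in by simp
  qed
  then have st: "snd (brk i w) = snd (brk_aux i (Suc s0) suf U0 []) @ [s0]"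
    using orig brk_aux_extra[of s0 "Suc s0" i suf U0 "[]"] by simp
  have w': "w[s0 := i] ! s0 = i" "take s0 (w[s0 := i]) = take s0 w"
       "drop (Suc s0) (w[s0 := i]) = suf" "s0 < length (w[s0 := i])"
    using sl suf_def by auto
  have new: "brk i (w[s0 := i]) = brk_aux i (Suc s0) suf (U0 @ [s0]) []"
    using brk_split[OF w'(4), of i] w' u0 S00 by (simp add: bstep_def)
  have "snd (brk i (w[s0 := i])) = snd (brk_aux i (Suc s0) suf U0 [])"
    unfolding new using brk_aux_us[of i "Suc s0" suf "U0 @ [s0]" "[]"] brk_aux_us[of i "Suc s0" suf U0 "[]"]
    by simp
  then show ?thesis using st sl c1 by simp
qed

definition Pv :: "nat \<Rightarrow> nat list \<Rightarrow> int" where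
  "Pv i xs = int (length (filter (\<lambda>y. y = i) xs)) - int (length (filter (\<lambda>y. y = Suc i) xs))"

definition Fm :: "nat \<Rightarrow> nat list \<Rightarrow> int" where
  "Fm i xs = Max ((\<lambda>j. Pv i (take j xs)) ` {..length xs})"

lemma Fm_snoc: "Fm i (xs @ [x]) = max (Fm i xs) (Pv i (xs @ [x]))"
proof -
  have "{..length (xs @ [x])} = insert (Suc (length xs)) {..length xs}" by auto
  then have "(\<lambda>j. Pv i (take j (xs @ [x]))) ` {..length (xs @ [x])} =
        insert (Pv i (xs @ [x])) ((\<lambda>j. Pv i (take j xs)) ` {..length xs})"
    by auto
  then show ?thesis unfolding Fm_def by (simp add: max.commute)
qed

lemma Fm_ge: "j \<le> length xs \<Longrightarrow> Pv i (take j xs) \<le> Fm i xs"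
  unfolding Fm_def by (intro Max_ge) auto

lemma Fm_ge_Pv: "Pv i xs \<le> Fm i xs"
  using Fm_ge[of "length xs" xs i] by simp

lemma Fm_nonneg: "0 \<le> Fm i xs"
  using Fm_ge[of 0 xs i] by (simp add: Pv_def)

lemma brk_Fm: "int (length (fst (brk i xs))) = Fm i xs \<and> int (length (snd (brk i xs))) = Fm i xs - Pv i xs"
proof (induction xs rule: rev_induct)
  case Nil then show ?case by (simp add: brk_def Fm_def Pv_def)
next
  case (snoc x xs)
  obtain us st where b: "brk i xs = (us, st)" by fastforce
  have IH: "int (length us) = Fm i xs" "int (length st) = Fm i xs - Pv i xs" using snoc b by auto
  have le: "Pv i xs \<le> Fm i xs" by (rule Fm_ge_Pv)
  show ?case
  proof (cases "x = Suc i")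
    case True
    then have "Pv i (xs @ [x]) = Pv i xs - 1" by (simp add: Pv_def)
    then show ?thesis using True IH le by (simp add: brk_snoc b bstep_def Fm_snoc)
  next
    case F: False
    show ?thesis
    proof (cases "x = i")
      case True
      then have P: "Pv i (xs @ [x]) = Pv i xs + 1" by (simp add: Pv_def)
      show ?thesis
      proof (cases st)
        case Nil then show ?thesis using True F IH P by (simp add: brk_snoc b bstep_def Fm_snoc)
      next
        case (Cons y st')
        then show ?thesis using True F IH P by (simp add: brk_snoc b bstep_def Fm_snoc)
      qed
    next
      case False
      then have "Pv i (xs @ [x]) = Pv i xs" using F by (simp add: Pv_def)
      then show ?thesis using F False IH le by (simp add: brk_snoc b bstep_def Fm_snoc)
    qed
  qed
qed

lemma iter_op_0: "iter_op g 0 b = Some b" by (simp add: iter_op_def)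

lemma iter_op_None: "((\<lambda>z. Option.bind z (g :: 'a \<Rightarrow> 'a option)) ^^ k) None = None"
  by (induction k) auto

lemma iter_op_Suc: "iter_op g (Suc k) b = (case g b of None \<Rightarrow> None | Some b' \<Rightarrow> iter_op g k b')"
  unfolding iter_op_def funpow_Suc_right by (simp add: iter_op_None split: option.splits)

lemma iter_count:
  assumes N: "\<And>b. g b = None \<longleftrightarrow> \<mu> b = (0::nat)"
    and S: "\<And>b b'. g b = Some b' \<Longrightarrow> \<mu> b' = \<mu> b - 1"
  shows "iter_op g k b \<noteq> None \<longleftrightarrow> k \<le> \<mu> b"
proof (induction k arbitrary: b)
  case 0 then show ?case by (simp add: iter_op_0)
next
  case (Suc k)
  show ?case
  proof (cases "g b")
    case None then show ?thesis using N[of b] by (simp add: iter_op_Suc)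
  next
    case (Some b')
    then have "\<mu> b \<noteq> 0" using N[of b] by auto
    then show ?thesis using Some Suc.IH[of b'] S[OF Some] by (auto simp add: iter_op_Suc)
  qed
qed

lemma greatest_iter:
  assumes N: "\<And>b. g b = None \<longleftrightarrow> \<mu> b = (0::nat)"
    and S: "\<And>b b'. g b = Some b' \<Longrightarrow> \<mu> b' = \<mu> b - 1"
  shows "(GREATEST k. iter_op g k b \<noteq> None) = \<mu> b"
  using iter_count[OF N S] by (intro Greatest_equality) auto

lemma concat_chunks: "concat (chunks ns w) = take (sum_list ns) w"
  by (induction ns arbitrary: w) (auto simp: take_add)

lemma map_length_chunks: "sum_list ns \<le> length w \<Longrightarrow> map length (chunks ns w) = ns"
  by (induction ns arbitrary: w) auto

lemma length_row_word: "length (row_word T) = sum_list (shape T)"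
  by (simp add: row_word_def shape_def length_concat sum_list_rev rev_map[symmetric])

lemma row_word_reshape: "length w = sum_list lam \<Longrightarrow> row_word (reshape lam w) = w"
  by (simp add: row_word_def reshape_def concat_chunks sum_list_rev)

lemma shape_reshape: "length w = sum_list lam \<Longrightarrow> shape (reshape lam w) = lam"
  by (simp add: shape_def reshape_def rev_map[symmetric] map_length_chunks sum_list_rev)

lemma word_f_None: "word_f i w = None \<longleftrightarrow> fst (brk i w) = []"
  by (simp add: word_f_def Let_def)

lemma word_f_Some: "word_f i w = Some w' \<Longrightarrow> length w' = length w \<and> length (fst (brk i w')) = length (fst (brk i w)) - 1"
  using f_struct[of i w "last (fst (brk i w))"]
  by (auto simp: word_f_def Let_def split: if_splits)

lemma word_e_None: "word_e i w = None \<longleftrightarrow> snd (brk i w) = []"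
  by (simp add: word_e_def Let_def)

lemma word_e_Some: "word_e i w = Some w' \<Longrightarrow> length w' = length w \<and> length (snd (brk i w')) = length (snd (brk i w)) - 1"
  using e_struct[of i w "last (snd (brk i w))"]
  by (auto simp: word_e_def Let_def split: if_splits)

lemma tab_f_Some: "tab_f i T = Some T' \<Longrightarrow> \<exists>w'. word_f i (row_word T) = Some w' \<and> row_word T' = w'"
  unfolding tab_f_def
  using word_f_Some[of i "row_word T"] row_word_reshape length_row_word by fastforce

lemma tab_e_Some: "tab_e i T = Some T' \<Longrightarrow> \<exists>w'. word_e i (row_word T) = Some w' \<and> row_word T' = w'"
  unfolding tab_e_def
  using word_e_Some[of i "row_word T"] row_word_reshape length_row_word by fastforce

lemma phi_brk: "phi i T = length (fst (brk i (row_word T)))"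
  unfolding phi_def
proof (rule greatest_iter)
  fix b show "tab_f i b = None \<longleftrightarrow> length (fst (brk i (row_word b))) = 0"
    by (simp add: tab_f_def word_f_None)
next
  fix b b' assume "tab_f i b = Some b'"
  then show "length (fst (brk i (row_word b'))) = length (fst (brk i (row_word b))) - 1"
    using tab_f_Some word_f_Some by blast
qed

lemma eps_brk: "eps i T = length (snd (brk i (row_word T)))"
  unfolding eps_def
proof (rule greatest_iter)
  fix b show "tab_e i b = None \<longleftrightarrow> length (snd (brk i (row_word b))) = 0"
    by (simp add: tab_e_def word_e_None)
next
  fix b b' assume "tab_e i b = Some b'"
  then show "length (snd (brk i (row_word b'))) = length (snd (brk i (row_word b))) - 1"
    using tab_e_Some word_e_Some by blast
qed

lemma brk_filter_aux:
  assumes "length us = length us'" "length st = length st'"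
  shows "length (fst (brk_aux i k xs us st)) = length (fst (brk_aux i k' (filter (\<lambda>y. y = i \<or> y = Suc i) xs) us' st'))
       \<and> length (snd (brk_aux i k xs us st)) = length (snd (brk_aux i k' (filter (\<lambda>y. y = i \<or> y = Suc i) xs) us' st'))"
  using assms
proof (induction xs arbitrary: k k' us us' st st')
  case Nil then show ?case by simp
next
  case (Cons x xs)
  show ?case
  proof (cases "x = Suc i")
    case True then show ?thesis using Cons.IH[of us us' "k # st" "k' # st'"] Cons.prems by simp
  next
    case F: False
    show ?thesis
    proof (cases "x = i")
      case True
      show ?thesis
      proof (cases st)
        case Nil
        then have "st' = []" using Cons.prems by simp
        then show ?thesis using True F Nil Cons.IH[of "us @ [k]" "us' @ [k']" "[]" "[]"] Cons.prems by simp
      next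
        case (Cons y sr)
        then obtain y' sr' where "st' = y' # sr'" using Cons.prems by (cases st') auto
        then show ?thesis using True F Cons Cons.IH[of us us' sr sr'] Cons.prems by simp
      qed
    next
      case False
      then show ?thesis using F Cons.IH[of us us' st st'] Cons.prems by simp
    qed
  qed
qed

lemma brk_filter:
  "length (fst (brk i (filter (\<lambda>y. y = i \<or> y = Suc i) xs))) = length (fst (brk i xs)) \<and>
   length (snd (brk i (filter (\<lambda>y. y = i \<or> y = Suc i) xs))) = length (snd (brk i xs))"
  using brk_filter_aux[of "[]" "[]" "[]" "[]" i 0 xs 0] by (simp add: brk_def)

definition rstart :: "nat list list \<Rightarrow> nat \<Rightarrow> nat" where
  "rstart T r = sum_list (map length (drop (Suc r) T))"

definition pos :: "nat list \<Rightarrow> nat \<Rightarrow> nat" where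
  "pos w x = (THE j. j < length w \<and> w ! j = x)"

lemma pos_nth: "distinct w \<Longrightarrow> j < length w \<Longrightarrow> pos w (w ! j) = j"
  unfolding pos_def by (rule the_equality) (auto simp: nth_eq_iff_index_eq)

lemma pos_in: "distinct w \<Longrightarrow> x \<in> set w \<Longrightarrow> pos w x < length w \<and> w ! pos w x = x"
  by (metis in_set_conv_nth pos_nth)

lemma set_take_pos: "distinct w \<Longrightarrow> set (take j w) = {x \<in> set w. pos w x < j}"
proof -
  assume d: "distinct w"
  show ?thesis
  proof (intro set_eqI iffI)
    fix x assume "x \<in> set (take j w)"
    then obtain k where "k < length (take j w)" "take j w ! k = x" by (auto simp: in_set_conv_nth)
    then show "x \<in> {x \<in> set w. pos w x < j}" using d pos_nth[OF d, of k] by auto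
  next
    fix x assume "x \<in> {x \<in> set w. pos w x < j}"
    then have "x \<in> set w" "pos w x < j" by auto
    then show "x \<in> set (take j w)" using pos_in[OF d] by (metis in_set_conv_nth length_take min_less_iff_conj nth_take)
  qed
qed

lemma rstart_step: "Suc r < length T \<Longrightarrow> rstart T r = length (T ! Suc r) + rstart T (Suc r)"
  unfolding rstart_def by (simp add: Cons_nth_drop_Suc[symmetric])

lemma rstart_mono: "r < r' \<Longrightarrow> r' < length T \<Longrightarrow> rstart T r' + length (T ! r') \<le> rstart T r"
proof (induction r' arbitrary: r)
  case 0 then show ?case by simp
next
  case (Suc r')
  show ?case
  proof (cases "r = r'")
    case True then show ?thesis using rstart_step[of r T] Suc.prems by simp
  next
    case False
    then have "rstart T r' + length (T ! r') \<le> rstart T r" using Suc by simp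
    moreover have "rstart T r' = length (T ! Suc r') + rstart T (Suc r')" using rstart_step Suc.prems by simp
    ultimately show ?thesis by simp
  qed
qed

lemma row_word_nth:
  assumes "r < length T" "c < length (T ! r)"
  shows "rstart T r + c < length (row_word T) \<and> row_word T ! (rstart T r + c) = T ! r ! c"
proof -
  have T: "T = take r T @ [T ! r] @ drop (Suc r) T" using assms by (simp add: id_take_nth_drop)
  have rw: "row_word T = concat (rev (drop (Suc r) T)) @ T ! r @ concat (rev (take r T))"
    unfolding row_word_def by (subst T) simp
  have l: "length (concat (rev (drop (Suc r) T))) = rstart T r"
    unfolding rstart_def by (simp add: length_concat rev_map[symmetric] sum_list_rev)
  show ?thesis unfolding rw using l assms by (simp add: nth_append)
qed

lemma set_row_word: "set (row_word T) = (\<Union>r<length T. set (T ! r))"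
proof -
  have "set T = (\<lambda>r. T ! r) ` {..<length T}" by (auto simp: in_set_conv_nth)
  then show ?thesis by (simp add: row_word_def)
qed

locale syt =
  fixes lam :: "nat list" and T :: "nat list list"
  assumes part: "partition lam" and syt: "T \<in> SYT lam"
begin

abbreviation "W \<equiv> row_word T"
abbreviation "N \<equiv> sum_list lam"

lemma shapeT: "shape T = lam" using syt by (simp add: SYT_def)
lemma lenT: "length T = length lam" using shapeT unfolding shape_def by (metis length_map)
lemma len_row: "r < length T \<Longrightarrow> length (T ! r) = lam ! r" using shapeT by (auto simp: shape_def)
lemma row_pos: "r < length T \<Longrightarrow> 0 < length (T ! r)"
  using len_row part lenT by (simp add: partition_def)
lemma distW: "distinct W" using syt by (simp add: SYT_def)
lemma setW: "set W = {1..N}" using syt by (simp add: SYT_def)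
lemma lenW: "length W = N" using length_row_word shapeT by simp
lemma rows_sorted: "r < length T \<Longrightarrow> sorted_wrt (<) (T ! r)" using syt by (simp add: SYT_def)
lemma colsT: "cols_strict T" using syt by (simp add: SYT_def)

lemma row_lt: "r < length T \<Longrightarrow> c < c' \<Longrightarrow> c' < length (T ! r) \<Longrightarrow> T ! r ! c < T ! r ! c'"
proof -
  assume a: "r < length T" "c < c'" "c' < length (T ! r)"
  have "sorted_wrt (<) (T ! r)" using rows_sorted a(1) .
  then show ?thesis using a(2,3) sorted_wrt_nth_less by blast
qed

lemma row_ge0: "r < length T \<Longrightarrow> c < length (T ! r) \<Longrightarrow> T ! r ! 0 \<le> T ! r ! c"
  using row_lt[of r 0 c] by (cases c) auto

lemma col0_lt: "r < r' \<Longrightarrow> r' < length T \<Longrightarrow> T ! r ! 0 < T ! r' ! 0"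
proof (induction r' arbitrary: r)
  case 0 then show ?case by simp
next
  case (Suc r')
  have cs: "\<forall>r c. Suc r < length T \<and> c < length (T ! Suc r) \<longrightarrow>
      c < length (T ! r) \<and> T ! r ! c < T ! Suc r ! c" using colsT unfolding cols_strict_def .
  have "T ! r' ! 0 < T ! Suc r' ! 0"
    using cs[rule_format, of r' 0] row_pos[OF Suc.prems(2)] Suc.prems(2) by simp
  show ?case
  proof (cases "r = r'")
    case True then show ?thesis using \<open>T ! r' ! 0 < T ! Suc r' ! 0\<close> by simp
  next
    case False
    then have "r < r'" using Suc.prems by simp
    then have "T ! r ! 0 < T ! r' ! 0" using Suc.IH Suc.prems by simp
    then show ?thesis using \<open>T ! r' ! 0 < T ! Suc r' ! 0\<close> by simp
  qed
qed

lemma entry_pos: "r < length T \<Longrightarrow> c < length (T ! r) \<Longrightarrow> pos W (T ! r ! c) = rstart T r + c"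
  using row_word_nth pos_nth[OF distW] by metis

lemma entry_in: "r < length T \<Longrightarrow> c < length (T ! r) \<Longrightarrow> T ! r ! c \<in> {1..N}"
  using row_word_nth setW by (metis nth_mem)

lemma coords: "x \<in> {1..N} \<Longrightarrow> \<exists>r c. r < length T \<and> c < length (T ! r) \<and> T ! r ! c = x"
proof -
  assume "x \<in> {1..N}"
  then have "x \<in> (\<Union>r<length T. set (T ! r))" using setW set_row_word by simp
  then obtain r where "r < length T" "x \<in> set (T ! r)" by auto
  then show ?thesis by (auto simp: in_set_conv_nth)
qed

lemma pos_lt_from_coords:
  assumes "r < length T" "c < length (T ! r)" "r' < length T" "c' < length (T ! r')"
    and "r' < r \<or> (r' = r \<and> c < c')"
  shows "pos W (T ! r ! c) < pos W (T ! r' ! c')"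
  using assms rstart_mono[of r' r T] by (auto simp: entry_pos)

lemma entry_inj:
  assumes "r < length T" "c < length (T ! r)" "r' < length T" "c' < length (T ! r')"
    and "T ! r ! c = T ! r' ! c'"
  shows "r = r' \<and> c = c'"
proof (rule ccontr)
  assume "\<not> (r = r' \<and> c = c')"
  then have "r' < r \<or> (r' = r \<and> c < c') \<or> r < r' \<or> (r = r' \<and> c' < c)" by auto
  then show False using pos_lt_from_coords assms by (metis less_irrefl)
qed

lemma rowof_eq: "r < length T \<Longrightarrow> c < length (T ! r) \<Longrightarrow> rowof T (T ! r ! c) = r"
  unfolding rowof_def
proof (rule the_equality)
  assume a: "r < length T" "c < length (T ! r)"
  then show "r < length T \<and> T ! r ! c \<in> set (T ! r)" by simp
  fix r' assume "r' < length T \<and> T ! r ! c \<in> set (T ! r')"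
  then obtain c' where "r' < length T" "c' < length (T ! r')" "T ! r' ! c' = T ! r ! c"
    by (auto simp: in_set_conv_nth)
  then show "r' = r" using entry_inj a by metis
qed

lemma entry_ge1: "r < length T \<Longrightarrow> c < length (T ! r) \<Longrightarrow> 1 \<le> T ! r ! c \<and> T ! r ! c \<le> N"
  using entry_in by auto

lemma below_rowstart:
  assumes r: "r < length T" and x: "x \<in> {1..N}" and lt: "x < T ! r ! 0"
  obtains r' c' where "r' < r" "c' < length (T ! r')" "T ! r' ! c' = x"
proof -
  obtain r' c' where rc: "r' < length T" "c' < length (T ! r')" "T ! r' ! c' = x" using coords x by blast
  have "r' < r"
  proof (rule ccontr)
    assume "\<not> r' < r"
    then have "T ! r ! 0 \<le> T ! r' ! 0" using col0_lt[of r r'] rc by (cases "r = r'") auto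
    also have "\<dots> \<le> x" using row_ge0 rc by metis
    finally show False using lt by simp
  qed
  then show ?thesis using that rc by blast
qed

lemma nondesc_pos:
  assumes "1 \<le> d" "Suc d \<le> N" "\<not> rowof T d < rowof T (Suc d)"
  shows "pos W d < pos W (Suc d)"
proof -
  have d1: "d \<in> {1..N}" "Suc d \<in> {1..N}" using assms by auto
  obtain r1 c1 where a: "r1 < length T" "c1 < length (T ! r1)" "T ! r1 ! c1 = d"
    using coords[OF d1(1)] by blast
  obtain r2 c2 where b: "r2 < length T" "c2 < length (T ! r2)" "T ! r2 ! c2 = Suc d"
    using coords[OF d1(2)] by blast
  have "rowof T d = r1" using rowof_eq[OF a(1,2)] a(3) by simp
  have "rowof T (Suc d) = r2" using rowof_eq[OF b(1,2)] b(3) by simp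
  then have "r2 \<le> r1" using assms \<open>rowof T d = r1\<close> by simp
  show ?thesis
  proof (cases "r2 < r1")
    case True then show ?thesis using pos_lt_from_coords[OF a(1,2) b(1,2)] a b by simp
  next
    case False
    then have "r2 = r1" using \<open>r2 \<le> r1\<close> by simp
    have "c1 < c2"
    proof (rule ccontr)
      assume "\<not> c1 < c2"
      then have "T ! r1 ! c2 \<le> T ! r1 ! c1" using row_lt[of r1 c2 c1] a by (cases "c1 = c2") auto
      then show False using a b \<open>r2 = r1\<close> by simp
    qed
    then show ?thesis using pos_lt_from_coords[OF a(1,2) b(1,2)] a b \<open>r2 = r1\<close> by simp
  qed
qed

lemma nondesc_chain:
  assumes "\<And>d. x \<le> d \<Longrightarrow> d < y \<Longrightarrow> \<not> rowof T d < rowof T (Suc d)"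
    and "1 \<le> x" "x < y" "y \<le> N"
  shows "pos W x < pos W y"
  using assms
proof (induction y)
  case 0 then show ?case by simp
next
  case (Suc y)
  have st: "pos W y < pos W (Suc y)" using nondesc_pos Suc.prems by simp
  show ?case
  proof (cases "x = y")
    case True then show ?thesis using st by simp
  next
    case False
    then have "pos W x < pos W y" using Suc by simp
    then show ?thesis using st by simp
  qed
qed

lemma desc_rowstart:
  assumes "0 < r" "r < length T"
  shows "T ! r ! 0 - 1 \<in> descents T"
proof -
  have r0: "0 < length (T ! r)" using row_pos assms by simp
  have "T ! 0 ! 0 < T ! r ! 0" using col0_lt assms by simp
  moreover have "1 \<le> T ! 0 ! 0"
  proof -
    have l: "0 < length T" using assms by linarith
    then have "0 < length (T ! 0)" using row_pos by blast
    then show ?thesis using entry_ge1[of 0 0] l by simp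
  qed
  ultimately have x1: "2 \<le> T ! r ! 0" by simp
  have xN: "T ! r ! 0 \<le> N" using entry_ge1 r0 assms by simp
  define x where "x = T ! r ! 0 - 1"
  have x: "x \<in> {1..N}" "Suc x = T ! r ! 0" using x1 xN x_def by auto
  obtain r' c' where rc: "r' < r" "c' < length (T ! r')" "T ! r' ! c' = x"
    using below_rowstart[OF assms(2) x(1)] x by auto
  have r'l: "r' < length T" using rc assms by simp
  have "rowof T x = r'" using rowof_eq[OF r'l rc(2)] rc(3) by simp
  moreover have "rowof T (Suc x) = r" using rowof_eq[OF assms(2) r0] x(2) by simp
  moreover have "x < length W" using x xN lenW by simp
  ultimately show ?thesis unfolding descents_def using x rc x_def by auto
qed

lemma pos_rowstart_before:
  assumes "r < length T" "x \<in> {1..N}" "x < T ! r ! 0"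
  shows "pos W (T ! r ! 0) < pos W x"
proof -
  obtain r' c' where rc: "r' < r" "c' < length (T ! r')" "T ! r' ! c' = x"
    using below_rowstart assms by blast
  then show ?thesis using pos_lt_from_coords[of r 0 r' c'] assms row_pos by auto
qed

end

lemma rstart_shape: "shape T = shape T' \<Longrightarrow> rstart T r = rstart T' r"
  unfolding rstart_def shape_def by (metis drop_map)

lemma zipdiff: "map (\<lambda>(a, b). b - a) (zip (map f [0..<Suc n]) (tl (map f [0..<Suc n]))) = map (\<lambda>j. f (Suc j) - f j) [0..<n]"
  by (rule nth_equalityI) (auto simp: nth_tl simp del: upt_Suc)

locale csv = syt +
  assumes desl: "length (Des T) = length lam"
begin

abbreviation "nr \<equiv> length lam"

lemma desc_sub: "descents T \<subseteq> {1..<N}" unfolding descents_def using lenW by auto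
lemma fin_desc: "finite (descents T)" using desc_sub finite_subset by blast

lemma len_Des: "length (Des T) = card (descents T) + 1"
  unfolding Des_def Let_def using fin_desc by simp

lemma card_desc: "card (descents T) = nr - 1" using len_Des desl by simp

lemma l_pos: "1 \<le> nr" using len_Des desl by simp
lemma lam_ne: "lam \<noteq> []" using l_pos by (cases lam) auto

lemma desc_set: "descents T = (\<lambda>r. T ! r ! 0 - 1) ` {1..<nr}"
proof -
  have sub: "(\<lambda>r. T ! r ! 0 - 1) ` {1..<nr} \<subseteq> descents T"
    using desc_rowstart lenT by auto
  have inj: "inj_on (\<lambda>r. T ! r ! 0 - 1) {1..<nr}"
  proof (rule inj_onI)
    fix r r' assume a: "r \<in> {1..<nr}" "r' \<in> {1..<nr}" "T ! r ! 0 - 1 = T ! r' ! 0 - 1"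
    have "1 \<le> T ! r ! 0" "1 \<le> T ! r' ! 0" using entry_ge1 row_pos a lenT by auto
    then have e: "T ! r ! 0 = T ! r' ! 0" using a by simp
    show "r = r'"
    proof (rule ccontr)
      assume "r \<noteq> r'"
      then have "r < r' \<or> r' < r" by auto
      then show False using col0_lt e a lenT by (metis atLeastLessThan_iff less_irrefl)
    qed
  qed
  have "card ((\<lambda>r. T ! r ! 0 - 1) ` {1..<nr}) = nr - 1" using card_image[OF inj] by simp
  then show ?thesis using card_subset_eq[OF fin_desc sub] card_desc by simp
qed

definition sd :: "nat \<Rightarrow> nat" where
  "sd j = (if j = 0 then 0 else if j < nr then T ! j ! 0 - 1 else N)"

lemma sd_step: "sd j \<le> sd (Suc j) \<and> (j < nr \<longrightarrow> sd j < sd (Suc j))"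
proof -
  have A: "\<And>r. r < nr \<Longrightarrow> 1 \<le> T ! r ! 0 \<and> T ! r ! 0 \<le> N" using entry_ge1 row_pos lenT by simp
  have B: "\<And>r r'. r < r' \<Longrightarrow> r' < nr \<Longrightarrow> T ! r ! 0 < T ! r' ! 0" using col0_lt lenT by simp
  show ?thesis
  proof (cases "Suc j < nr")
    case True
    have "1 \<le> T ! 0 ! 0" using A[of 0] lam_ne by simp
    then have "1 < T ! Suc j ! 0" using B[of 0 "Suc j"] True by simp
    moreover have "T ! j ! 0 < T ! Suc j ! 0" using B True by simp
    ultimately show ?thesis using True unfolding sd_def by auto
  next
    case False
    show ?thesis
    proof (cases "j < nr")
      case True
      then have "Suc j = nr" using False by simp
      then have "T ! j ! 0 \<le> N" using A True by simp
      moreover have "1 \<le> N" using A l_pos by (metis le_trans less_le_trans zero_less_one le_eq_less_or_eq) 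
      ultimately show ?thesis using True False unfolding sd_def by auto
    next
      case False
      then show ?thesis unfolding sd_def by auto
    qed
  qed
qed

lemma sd_mono: "j \<le> j' \<Longrightarrow> sd j \<le> sd j'"
proof (induction j')
  case 0 then show ?case by simp
next
  case (Suc j')
  show ?case
  proof (cases "j = Suc j'")
    case True then show ?thesis by simp
  next
    case False
    then have "sd j \<le> sd j'" using Suc by simp
    then show ?thesis using sd_step[of j'] by simp
  qed
qed

lemma sd_strict: "j < j' \<Longrightarrow> j' \<le> nr \<Longrightarrow> sd j < sd j'"
proof (induction j')
  case 0 then show ?case by simp
next
  case (Suc j')
  show ?case
  proof (cases "j = j'")
    case True then show ?thesis using sd_step[of j'] Suc.prems by simp
  next
    case False
    then have "sd j < sd j'" using Suc by simp
    then show ?thesis using sd_step[of j'] by simp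
  qed
qed

lemma sd0: "sd 0 = 0" by (simp add: sd_def)
lemma sdl: "sd nr = N" by (simp add: sd_def)
lemma sd_row: "0 < r \<Longrightarrow> r < nr \<Longrightarrow> sd r = T ! r ! 0 - 1" by (simp add: sd_def)

lemma sorted_desc: "sorted_list_of_set (descents T) = map sd [1..<nr]"
proof -
  have st: "sorted_wrt (<) (map sd [1..<nr])"
    unfolding sorted_wrt_map by (rule sorted_wrt_mono_rel[OF _ sorted_wrt_upt]) (use sd_strict in auto)
  have "set (map sd [1..<nr]) = sd ` {1..<nr}" by simp
  also have "\<dots> = (\<lambda>r. T ! r ! 0 - 1) ` {1..<nr}" by (rule image_cong) (auto simp: sd_def)
  finally have se: "set (map sd [1..<nr]) = descents T" using desc_set by simp
  have le: "length (map sd [1..<nr]) = card (descents T)" using card_desc by simp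
  show ?thesis using sorted_list_of_set_unique[OF fin_desc, of "map sd [1..<nr]"] st se le by simp
qed

lemma Des_eq: "Des T = map (\<lambda>j. sd (Suc j) - sd j) [0..<nr]"
proof -
  have u0: "[0..<nr] = 0 # [Suc 0..<nr]" using lam_ne upt_conv_Cons[of 0 nr] by simp
  have u: "[0..<Suc nr] = 0 # [1..<nr] @ [nr]" using u0 by simp
  have bs: "0 # sorted_list_of_set (descents T) @ [length W] = map sd [0..<Suc nr]"
    unfolding sorted_desc u using sd0 sdl lenW by simp
  show ?thesis unfolding Des_def Let_def bs zipdiff ..
qed

lemma sum_take_Des: "sum_list (take j (Des T)) = sd (min j nr)"
proof (induction j)
  case 0 then show ?case by (simp add: sd0)
next
  case (Suc j)
  show ?case
  proof (cases "j < nr")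
    case True
    then have "take (Suc j) (Des T) = take j (Des T) @ [sd (Suc j) - sd j]"
      unfolding Des_eq by (simp add: take_Suc_conv_app_nth)
    then show ?thesis using Suc True sd_step[of j] by simp
  next
    case False
    then show ?thesis using Suc Des_eq by simp
  qed
qed

lemma block_eq: "comp_block (Des T) j = {sd (min (j - 1) nr) + 1 .. sd (min j nr)}"
  unfolding comp_block_def sum_take_Des ..

lemma block_ex: "x \<in> {1..N} \<Longrightarrow> \<exists>k. 1 \<le> k \<and> x \<in> comp_block (Des T) k"
proof -
  assume x: "x \<in> {1..N}"
  define k where "k = (LEAST k. x \<le> sd k)"
  have ex: "x \<le> sd nr" using x sdl by simp
  have k1: "x \<le> sd k" unfolding k_def by (rule LeastI[of _ nr]) (rule ex)
  have kl: "k \<le> nr" unfolding k_def by (rule Least_le) (rule ex)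
  have k0: "k \<noteq> 0"
  proof
    assume "k = 0" then show False using k1 x sd0 by simp
  qed
  have "\<not> x \<le> sd (k - 1)" unfolding k_def using k0 not_less_Least[of "k - 1" "\<lambda>k. x \<le> sd k"]
    by (simp add: k_def)
  then show ?thesis using k1 kl k0 by (intro exI[of _ k]) (auto simp: block_eq)
qed

lemma block_uniq: "x \<in> comp_block (Des T) k1 \<Longrightarrow> x \<in> comp_block (Des T) k2 \<Longrightarrow> 1 \<le> k1 \<Longrightarrow> 1 \<le> k2 \<Longrightarrow> k1 = k2"
proof (rule ccontr)
  assume a: "x \<in> comp_block (Des T) k1" "x \<in> comp_block (Des T) k2" "1 \<le> k1" "1 \<le> k2" "k1 \<noteq> k2"
  have *: "\<And>a b. a < b \<Longrightarrow> x \<in> comp_block (Des T) a \<Longrightarrow> x \<in> comp_block (Des T) b \<Longrightarrow> 1 \<le> a \<Longrightarrow> False"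
  proof -
    fix a b assume ab: "a < b" "x \<in> comp_block (Des T) a" "x \<in> comp_block (Des T) b" "1 \<le> a"
    have "sd (min a nr) \<le> sd (min (b - 1) nr)" using ab by (intro sd_mono) auto
    then show False using ab by (auto simp: block_eq)
  qed
  show False using a *[of k1 k2] *[of k2 k1] by (cases "k1 < k2") auto
qed

lemma blockof_iff: "x \<in> {1..N} \<Longrightarrow> 1 \<le> k \<Longrightarrow> blockof (Des T) x = k \<longleftrightarrow> x \<in> comp_block (Des T) k"
proof -
  assume x: "x \<in> {1..N}" and k: "1 \<le> k"
  obtain k0 where k0: "1 \<le> k0" "x \<in> comp_block (Des T) k0" using block_ex x by blast
  have L: "1 \<le> blockof (Des T) x \<and> x \<in> comp_block (Des T) (blockof (Des T) x)"
    unfolding blockof_def by (rule LeastI[of _ k0]) (use k0 in simp)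
  show ?thesis
  proof
    assume "blockof (Des T) x = k" then show "x \<in> comp_block (Des T) k" using L by simp
  next
    assume "x \<in> comp_block (Des T) k"
    then show "blockof (Des T) x = k" using L block_uniq k by blast
  qed
qed

end

lemma ins_snoc: "insertion_tableau (xs @ [x]) = row_ins x (insertion_tableau xs)"
  by (simp add: insertion_tableau_def)

lemma rsk_shuffle:
  assumes "sorted_wrt (<) (filter (\<lambda>x. x \<le> p) xs)" "sorted_wrt (<) (filter (\<lambda>x. p < x) xs)"
  shows "\<exists>Bm Q. filter (\<lambda>x. p < x) xs = Bm @ Q
     \<and> length Q = length (snd (brk i (map (\<lambda>x. if x \<le> p then i else Suc i) xs)))
     \<and> insertion_tableau xs = (if xs = [] then [] else
          (filter (\<lambda>x. x \<le> p) xs @ Q) # (if Bm = [] then [] else [Bm]))"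
  using assms
proof (induction xs rule: rev_induct)
  case Nil then show ?case by (simp add: insertion_tableau_def brk_def)
next
  case (snoc x xs)
  define \<kappa> where "\<kappa> = (\<lambda>x. if x \<le> p then i else Suc i)"
  have s1: "sorted_wrt (<) (filter (\<lambda>x. x \<le> p) xs)" "sorted_wrt (<) (filter (\<lambda>x. p < x) xs)"
    using snoc.prems by (auto simp: sorted_wrt_append)
  obtain Bm Q where IH: "filter (\<lambda>x. p < x) xs = Bm @ Q"
     "length Q = length (snd (brk i (map \<kappa> xs)))"
     "insertion_tableau xs = (if xs = [] then [] else
          (filter (\<lambda>x. x \<le> p) xs @ Q) # (if Bm = [] then [] else [Bm]))"
    using snoc.IH[OF s1] \<kappa>_def by blast
  define As where "As = filter (\<lambda>x. x \<le> p) xs"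
  define R where "R = (if Bm = [] then [] else [Bm])"
  have BQ: "sorted_wrt (<) (Bm @ Q)" using s1 IH by simp
  have Qp: "\<forall>y\<in>set Q. p < y" using IH(1) by (metis filter_is_subset in_set_conv_decomp mem_Collect_eq set_filter subset_code(1) Un_iff set_append)
  have brk_snoc': "brk i (map \<kappa> (xs @ [x])) = bstep i (length xs) (\<kappa> x) (brk i (map \<kappa> xs))"
    using brk_snoc[of i "map \<kappa> xs" "\<kappa> x"] by simp
  obtain us st where bx: "brk i (map \<kappa> xs) = (us, st)" by fastforce
  have lQ: "length Q = length st" using IH(2) bx by simp
  show ?case
  proof (cases "x \<le> p")
    case xA: True
    have As_lt: "\<forall>y\<in>set As. y < x" using snoc.prems(1) xA unfolding As_def by (simp add: sorted_wrt_append)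
    have kx: "\<kappa> x = i" using xA \<kappa>_def by simp
    have fA: "filter (\<lambda>x. x \<le> p) (xs @ [x]) = As @ [x]" using xA As_def by simp
    have fB: "filter (\<lambda>x. p < x) (xs @ [x]) = Bm @ Q" using xA IH(1) by simp
    show ?thesis
    proof (cases "xs = []")
      case True
      then show ?thesis using xA by (intro exI[of _ "[]"] exI[of _ "[]"])
        (simp add: insertion_tableau_def brk_def bstep_def)
    next
      case xne: False
      have tab: "insertion_tableau xs = (As @ Q) # R" using IH(3) xne As_def R_def by simp
      have tw: "takeWhile (\<lambda>y. y \<le> x) (As @ Q) = As"
      proof -
        have "takeWhile (\<lambda>y. y \<le> x) (As @ Q) = As @ takeWhile (\<lambda>y. y \<le> x) Q"
          using As_lt by (intro takeWhile_append2) auto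
        moreover have "takeWhile (\<lambda>y. y \<le> x) Q = []" using Qp xA
          by (cases Q) auto
        ultimately show ?thesis by simp
      qed
      have dw: "dropWhile (\<lambda>y. y \<le> x) (As @ Q) = Q"
      proof -
        have "dropWhile (\<lambda>y. y \<le> x) (As @ Q) = dropWhile (\<lambda>y. y \<le> x) Q"
          using As_lt by (intro dropWhile_append2) auto
        moreover have "dropWhile (\<lambda>y. y \<le> x) Q = Q" using Qp xA by (cases Q) auto
        ultimately show ?thesis by simp
      qed
      show ?thesis
      proof (cases Q)
        case Nil
        have "insertion_tableau (xs @ [x]) = (As @ [x] @ []) # R"
          using tab tw dw Nil by (simp add: ins_snoc)
        moreover have "st = []" using lQ Nil by simp
        ultimately show ?thesis using fA fB Nil R_def kx bx brk_snoc' \<kappa>_def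
          by (intro exI[of _ Bm] exI[of _ "[]"]) (simp add: bstep_def)
      next
        case (Cons q Q')
        have Bq: "\<forall>b\<in>set Bm. b < q" using BQ Cons by (simp add: sorted_wrt_append)
        have rq: "row_ins q R = [Bm @ [q]]"
        proof (cases "Bm = []")
          case True then show ?thesis using R_def by simp
        next
          case False
          have "takeWhile (\<lambda>y. y \<le> q) Bm = Bm" using Bq by (simp add: takeWhile_eq_all_conv less_imp_le)
          moreover have "dropWhile (\<lambda>y. y \<le> q) Bm = []" using Bq by (simp add: less_imp_le)
          ultimately show ?thesis using R_def False by simp
        qed
        have "insertion_tableau (xs @ [x]) = (As @ [x] @ Q') # [Bm @ [q]]"
          using tab tw dw Cons rq by (simp add: ins_snoc)
        moreover obtain s st' where "st = s # st'" using lQ Cons by (cases st) auto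
        ultimately show ?thesis using fA fB Cons R_def kx bx brk_snoc' lQ \<kappa>_def
          by (intro exI[of _ "Bm @ [q]"] exI[of _ Q']) (simp add: bstep_def)
      qed
    qed
  next
    case xB: False
    have B_lt: "\<forall>y\<in>set (Bm @ Q). y < x" using snoc.prems(2) xB IH(1) by (auto simp: sorted_wrt_append)
    have kx: "\<kappa> x = Suc i" using xB \<kappa>_def by simp
    have fA: "filter (\<lambda>x. x \<le> p) (xs @ [x]) = As" using xB As_def by simp
    have fB: "filter (\<lambda>x. p < x) (xs @ [x]) = Bm @ Q @ [x]" using xB IH(1) by simp
    show ?thesis
    proof (cases "xs = []")
      case True
      then have "Bm = []" "Q = []" using IH(1) by auto
      then show ?thesis using xB True As_def by (intro exI[of _ "[]"] exI[of _ "[x]"])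
        (simp add: insertion_tableau_def brk_def bstep_def)
    next
      case xne: False
      have tab: "insertion_tableau xs = (As @ Q) # R" using IH(3) xne As_def R_def by simp
      have allx: "\<forall>y\<in>set (As @ Q). y \<le> x"
        using B_lt xB unfolding As_def by (auto intro: less_imp_le)
      have tw: "takeWhile (\<lambda>y. y \<le> x) (As @ Q) = As @ Q" using allx by (simp add: takeWhile_eq_all_conv)
      have dw: "dropWhile (\<lambda>y. y \<le> x) (As @ Q) = []" using allx by simp
      have "insertion_tableau (xs @ [x]) = (As @ Q @ [x]) # R"
        using tab tw dw by (simp add: ins_snoc)
      then show ?thesis using fA fB R_def kx bx brk_snoc' lQ \<kappa>_def
        by (intro exI[of _ Bm] exI[of _ "Q @ [x]"]) (simp add: bstep_def)
    qed
  qed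
qed

lemma dyck_consequence:
  assumes "sorted_wrt (<) (filter (\<lambda>x. x \<le> p) u)" "sorted_wrt (<) (filter (\<lambda>x. p < x) u)"
    and tab: "insertion_tableau u = [[i..<i + m + 1], [i + m + 1..<i + 2 * m + 1]]" and m: "1 \<le> m"
  shows "p = i + m \<and> snd (brk i (map (\<lambda>x. if x \<le> p then i else Suc i) u)) = []"
proof -
  obtain Bm Q where BQ: "filter (\<lambda>x. p < x) u = Bm @ Q"
     "length Q = length (snd (brk i (map (\<lambda>x. if x \<le> p then i else Suc i) u)))"
     "insertion_tableau u = (if u = [] then [] else
          (filter (\<lambda>x. x \<le> p) u @ Q) # (if Bm = [] then [] else [Bm]))"
    using rsk_shuffle[OF assms(1,2), of i] by blast
  have une: "u \<noteq> []" using tab BQ(3) by auto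
  have e: "(filter (\<lambda>x. x \<le> p) u @ Q) # (if Bm = [] then [] else [Bm]) = [[i..<i + m + 1], [i + m + 1..<i + 2 * m + 1]]"
    using tab BQ(3) une by simp
  then have A: "filter (\<lambda>x. x \<le> p) u @ Q = [i..<i + m + 1]" and Bne: "Bm \<noteq> []"
    and B: "Bm = [i + m + 1..<i + 2 * m + 1]"
    by (auto split: if_splits)
  have srt: "sorted_wrt (<) (Bm @ Q)" using assms(2) BQ(1) by simp
  have Q0: "Q = []"
  proof (rule ccontr)
    assume "Q \<noteq> []"
    then obtain q Q' where q: "Q = q # Q'" by (cases Q) auto
    have "q \<in> set [i..<i + m + 1]" using A q by (metis in_set_conv_decomp)
    then have "q \<le> i + m" by auto
    moreover have "i + 2 * m \<in> set Bm" using B m by simp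
    then have "i + 2 * m < q" using srt q by (auto simp: sorted_wrt_append)
    ultimately show False using m by simp
  qed
  have "i + m \<in> set (filter (\<lambda>x. x \<le> p) u)" using A Q0 by simp
  then have "i + m \<le> p" by simp
  moreover have "i + m + 1 \<in> set Bm" using B m by auto
  then have "i + m + 1 \<in> set (filter (\<lambda>x. p < x) u)" using BQ(1) by simp
  then have "p < i + m + 1" by simp
  ultimately show ?thesis using BQ(2) Q0 by simp
qed

lemma sorted_filter_pos:
  assumes d: "distinct W"
    and h: "\<And>x y. P x \<Longrightarrow> P y \<Longrightarrow> x \<in> set W \<Longrightarrow> y \<in> set W \<Longrightarrow> x < y \<Longrightarrow> pos W x < pos W y"
  shows "sorted_wrt (<) (filter P W)"
proof -
  have e: "filter P W = map ((!) W) (filter (\<lambda>j. P (W ! j)) [0..<length W])"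
    by (subst map_nth[symmetric]) (simp add: filter_map comp_def)
  have s: "sorted_wrt (<) (filter (\<lambda>j. P (W ! j)) [0..<length W])"
    by (rule sorted_wrt_filter) simp
  have "sorted_wrt (\<lambda>j k. W ! j < W ! k) (filter (\<lambda>j. P (W ! j)) [0..<length W])"
  proof (rule sorted_wrt_mono_rel[OF _ s])
    fix j k assume a: "j \<in> set (filter (\<lambda>j. P (W ! j)) [0..<length W])"
      "k \<in> set (filter (\<lambda>j. P (W ! j)) [0..<length W])" "j < k"
    then have jk: "j < length W" "k < length W" "P (W ! j)" "P (W ! k)" by auto
    show "W ! j < W ! k"
    proof (rule ccontr)
      assume "\<not> W ! j < W ! k"
      moreover have "W ! j \<noteq> W ! k" using d jk a(3) by (simp add: nth_eq_iff_index_eq)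
      ultimately have "W ! k < W ! j" by simp
      then have "pos W (W ! k) < pos W (W ! j)" using h jk by simp
      then show False using pos_nth[OF d] jk a(3) by simp
    qed
  qed
  then show ?thesis unfolding e sorted_wrt_map .
qed

lemma count_map: "distinct xs \<Longrightarrow> length (filter R (map g xs)) = card ({x. R (g x)} \<inter> set xs)"
  by (simp add: filter_map distinct_length_filter comp_def)

lemma row_word_map: "row_word (map (map g) T) = map g (row_word T)"
  by (simp add: row_word_def rev_map map_concat)

lemma shape_map: "shape (map (map g) T) = shape T"
  by (simp add: shape_def comp_def)

locale ctx = csv lam T
  for lam T +
  fixes T' :: "nat list list" and I :: "nat set" and i i' m :: nat and c' :: "nat list list"
  assumes T'v: "T' \<in> CS_vert lam"
    and i1: "1 \<le> i" and il: "i + 1 \<le> length (Des T)"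
    and Isub: "I \<subseteq> comp_block (Des T) i \<union> comp_block (Des T) (i + 1)"
    and Ieq: "I = {i'..i' + 2 * m}"
    and dy: "dyck_pattern (row_word T) i' m"
    and tf: "tab_f i' (dyck_collapse i' m T) = Some c'"
    and T'eq: "T' = std c'"
begin

definition a where "a = sd (i - 1) + 1"
definition p where "p = sd i"
definition q where "q = sd (i + 1)"

lemma il': "i < nr" using il desl by simp

lemma blk_i: "comp_block (Des T) i = {a..p}"
  using il' unfolding a_def p_def by (simp add: block_eq)
lemma blk_i1: "comp_block (Des T) (i + 1) = {p + 1..q}"
  using il' unfolding q_def p_def by (simp add: block_eq)

lemma ap: "a \<le> p" using sd_strict[of "i - 1" i] il' i1 unfolding a_def p_def by simp
lemma pq: "p < q" using sd_strict[of i "i + 1"] il' unfolding q_def p_def by simp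
lemma qN: "q \<le> N" using sd_mono[of "i + 1" nr] il' sdl unfolding q_def by simp
lemma a1: "1 \<le> a" unfolding a_def by simp

lemma m1: "1 \<le> m" and i'1: "1 \<le> i'" and i'N: "i' + 2 * m \<le> N"
  and dtab: "insertion_tableau (filter (\<lambda>x. x \<in> {i'..i' + 2 * m}) W) = [[i'..<i' + m + 1], [i' + m + 1..<i' + 2 * m + 1]]"
  using dy lenW unfolding dyck_pattern_def by auto

lemma Iab: "a \<le> i'" "i' + 2 * m \<le> q"
proof -
  have s: "I \<subseteq> {a..p} \<union> {p + 1..q}" using Isub blk_i blk_i1 by simp
  have "i' \<in> I" "i' + 2 * m \<in> I" using Ieq by auto
  then have "i' \<in> {a..p} \<union> {p + 1..q}" "i' + 2 * m \<in> {a..p} \<union> {p + 1..q}" using s by auto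
  then show "a \<le> i'" "i' + 2 * m \<le> q" using ap pq by auto
qed

lemma p_row: "p + 1 = T ! i ! 0"
proof -
  have "p = T ! i ! 0 - 1" using sd_row[of i] i1 il' unfolding p_def by simp
  moreover have "1 \<le> T ! i ! 0" using entry_ge1 row_pos il' lenT by simp
  ultimately show ?thesis by simp
qed

lemma desc_is_sd: "d \<in> descents T \<Longrightarrow> \<exists>r. 1 \<le> r \<and> r < nr \<and> d = sd r"
  using desc_set sd_row by auto

lemma sd_lt_iff: "sd r < sd r' \<Longrightarrow> r' \<le> nr \<Longrightarrow> r < r'"
  using sd_mono[of r' r] by (cases "r < r'") auto

lemma no_desc_L: "a \<le> d \<Longrightarrow> d < p \<Longrightarrow> d \<notin> descents T"
proof
  assume d: "a \<le> d" "d < p" "d \<in> descents T"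
  then obtain r where r: "1 \<le> r" "r < nr" "d = sd r" using desc_is_sd by blast
  have "sd (i - 1) < sd r" using d r unfolding a_def by simp
  then have "i - 1 < r" using sd_lt_iff r by simp
  moreover have "sd r < sd i" using d r unfolding p_def by simp
  then have "r < i" using sd_lt_iff il' by simp
  ultimately show False by simp
qed

lemma no_desc_H: "p < d \<Longrightarrow> d < q \<Longrightarrow> d \<notin> descents T"
proof
  assume d: "p < d" "d < q" "d \<in> descents T"
  then obtain r where r: "1 \<le> r" "r < nr" "d = sd r" using desc_is_sd by blast
  have "sd i < sd r" using d r unfolding p_def by simp
  then have "i < r" using sd_lt_iff r by simp
  moreover have "sd r < sd (i + 1)" using d r unfolding q_def by simp
  then have "r < i + 1" using sd_lt_iff il' by simp
  ultimately show False by simp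
qed

lemma notdesc_row: "1 \<le> d \<Longrightarrow> d < N \<Longrightarrow> d \<notin> descents T \<Longrightarrow> \<not> rowof T d < rowof T (Suc d)"
  unfolding descents_def using lenW by auto

lemma incL: "a \<le> x \<Longrightarrow> x < y \<Longrightarrow> y \<le> p \<Longrightarrow> pos W x < pos W y"
proof -
  assume a: "a \<le> x" "x < y" "y \<le> p"
  have "\<And>d. x \<le> d \<Longrightarrow> d < y \<Longrightarrow> \<not> rowof T d < rowof T (Suc d)"
  proof -
    fix d assume "x \<le> d" "d < y"
    then have "a \<le> d" "d < p" "1 \<le> d" "d < N" using a a1 pq qN by auto
    then show "\<not> rowof T d < rowof T (Suc d)" using no_desc_L notdesc_row by blast
  qed
  then show ?thesis using nondesc_chain[of x y] a a1 pq qN by auto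
qed

lemma incH: "p + 1 \<le> x \<Longrightarrow> x < y \<Longrightarrow> y \<le> q \<Longrightarrow> pos W x < pos W y"
proof -
  assume a: "p + 1 \<le> x" "x < y" "y \<le> q"
  have "\<And>d. x \<le> d \<Longrightarrow> d < y \<Longrightarrow> \<not> rowof T d < rowof T (Suc d)"
  proof -
    fix d assume "x \<le> d" "d < y"
    then have "p < d" "d < q" "1 \<le> d" "d < N" using a qN by auto
    then show "\<not> rowof T d < rowof T (Suc d)" using no_desc_H notdesc_row by blast
  qed
  then show ?thesis using nondesc_chain[of x y] a qN by auto
qed

end

context ctx begin

definition gam :: "nat \<Rightarrow> nat" where
  "gam x = (if i' \<le> x \<and> x \<le> i' + m then i' else if i' + m + 1 \<le> x \<and> x \<le> i' + 2 * m then i' + 1 else x)"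

definition u where "u = filter (\<lambda>x. x \<in> {i'..i' + 2 * m}) W"

abbreviation "cw \<equiv> map gam W"

lemma cw_eq: "row_word (dyck_collapse i' m T) = cw"
  unfolding dyck_collapse_def row_word_map gam_def by simp

lemma shape_C: "shape (dyck_collapse i' m T) = lam"
  unfolding dyck_collapse_def shape_map using shapeT .

lemma p_eq_and: "p = i' + m \<and> snd (brk i' (map (\<lambda>x. if x \<le> p then i' else Suc i') u)) = []"
proof (rule dyck_consequence[OF _ _ _ m1])
  have "filter (\<lambda>x. x \<le> p) u = filter (\<lambda>x. x \<in> {i'..i' + 2 * m} \<and> x \<le> p) W"
    unfolding u_def by (simp add: conj_commute)
  moreover have "sorted_wrt (<) (filter (\<lambda>x. x \<in> {i'..i' + 2 * m} \<and> x \<le> p) W)"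
    by (rule sorted_filter_pos[OF distW]) (use incL Iab in auto)
  ultimately show "sorted_wrt (<) (filter (\<lambda>x. x \<le> p) u)" by simp
next
  have "filter (\<lambda>x. p < x) u = filter (\<lambda>x. x \<in> {i'..i' + 2 * m} \<and> p < x) W"
    unfolding u_def by (simp add: conj_commute)
  moreover have "sorted_wrt (<) (filter (\<lambda>x. x \<in> {i'..i' + 2 * m} \<and> p < x) W)"
    by (rule sorted_filter_pos[OF distW]) (use incH Iab in auto)
  ultimately show "sorted_wrt (<) (filter (\<lambda>x. p < x) u)" by simp
next
  show "insertion_tableau u = [[i'..<i' + m + 1], [i' + m + 1..<i' + 2 * m + 1]]"
    using dtab unfolding u_def .
qed

lemma p_eq: "p = i' + m" using p_eq_and by simp

lemma gam_i: "gam x = i' \<longleftrightarrow> x \<in> {i'..p}"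
  using m1 p_eq unfolding gam_def by auto

lemma gam_Si: "gam x = Suc i' \<longleftrightarrow> x \<in> {p + 1..p + m}"
  using m1 p_eq unfolding gam_def by auto

lemma cw_snd: "snd (brk i' cw) = []"
proof -
  have "filter (\<lambda>y. y = i' \<or> y = Suc i') cw = map gam (filter (\<lambda>x. gam x = i' \<or> gam x = Suc i') W)"
    by (simp add: filter_map comp_def)
  also have "filter (\<lambda>x. gam x = i' \<or> gam x = Suc i') W = u"
    unfolding u_def using gam_i gam_Si p_eq by (intro filter_cong) auto
  also have "map gam u = map (\<lambda>x. if x \<le> p then i' else Suc i') u"
  proof (rule map_cong[OF refl])
    fix x assume "x \<in> set u"
    then have "x \<in> {i'..i' + 2 * m}" unfolding u_def by simp
    then show "gam x = (if x \<le> p then i' else Suc i')" using p_eq unfolding gam_def by auto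
  qed
  finally have "length (snd (brk i' cw)) = length (snd (brk i' (map (\<lambda>x. if x \<le> p then i' else Suc i') u)))"
    using brk_filter[of i' cw] by simp
  moreover have "snd (brk i' (map (\<lambda>x. if x \<le> p then i' else Suc i') u)) = []"
    using p_eq_and by blast
  ultimately show ?thesis by simp
qed

lemma Pv_take: "Pv c (take j (map f W)) =
   int (card ({x. f x = c} \<inter> set (take j W))) - int (card ({x. f x = Suc c} \<inter> set (take j W)))"
proof -
  have d: "distinct (take j W)" using distW by simp
  show ?thesis unfolding Pv_def take_map
    using count_map[OF d, of "\<lambda>y. y = c" f] count_map[OF d, of "\<lambda>y. y = Suc c" f] by simp
qed

abbreviation "S j \<equiv> set (take j W)"

lemma S_sub: "S j \<subseteq> {1..N}" using setW set_take_subset[of j W] by simp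

lemma Pv_cw: "Pv i' (take j cw) = int (card ({i'..p} \<inter> S j)) - int (card ({p + 1..p + m} \<inter> S j))"
proof -
  have "{x. gam x = i'} = {i'..p}" "{x. gam x = Suc i'} = {p + 1..p + m}" using gam_i gam_Si by auto
  then show ?thesis using Pv_take[of i' j gam] by simp
qed

lemma SN: "S N = {1..N}" using setW lenW by simp

lemma pm_N: "p + m \<le> N" using p_eq i'N by simp

lemma Pv_cw_full: "Pv i' cw = 1"
proof -
  have "take N cw = cw" using lenW by simp
  then have "Pv i' cw = int (card ({i'..p} \<inter> S N)) - int (card ({p + 1..p + m} \<inter> S N))"
    using Pv_cw[of N] by simp
  also have "{i'..p} \<inter> S N = {i'..p}" using SN i'1 pm_N by auto
  also have "{p + 1..p + m} \<inter> S N = {p + 1..p + m}" using SN i'1 pm_N by auto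
  finally show ?thesis using p_eq by simp
qed

lemma Fm_cw: "Fm i' cw = 1"
  using brk_Fm[of i' cw] cw_snd Pv_cw_full by simp

lemma fst_cw_len: "length (fst (brk i' cw)) = 1"
  using brk_Fm[of i' cw] Fm_cw by simp

definition k0 where "k0 = last (fst (brk i' cw))"
definition x0 where "x0 = W ! k0"

lemma k0_props: "k0 < length cw \<and> cw ! k0 = i' \<and> brk i' (take (Suc k0) cw) = (fst (brk i' cw), [])
         \<and> fst (brk i' (cw[k0 := Suc i'])) = butlast (fst (brk i' cw))"
  using f_struct[of i' cw k0] fst_cw_len k0_def by fastforce

lemma k0N: "k0 < N" using k0_props lenW by simp

lemma x0_in: "x0 \<in> {i'..p}" using k0_props gam_i k0N lenW unfolding x0_def by simp

lemma pos_x0: "pos W x0 = k0" unfolding x0_def using pos_nth distW k0N lenW by simp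

lemma Pv_k0: "Pv i' (take (Suc k0) cw) = 1"
  using brk_Fm[of i' "take (Suc k0) cw"] k0_props fst_cw_len by simp

lemma word_f_cw: "word_f i' cw = Some (cw[k0 := Suc i'])"
  unfolding word_f_def Let_def k0_def using fst_cw_len by auto

lemma x0_set: "x0 \<in> set W" using x0_def k0N lenW by simp

lemma pos_in_S: "y \<in> set W \<Longrightarrow> y \<in> S j \<longleftrightarrow> pos W y < j"
  using set_take_pos[OF distW] by simp

end

context ctx begin

abbreviation "w2 \<equiv> cw[k0 := Suc i']"

definition g2 :: "nat \<Rightarrow> nat" where "g2 x = (if x = x0 then Suc i' else gam x)"

lemma w2_map: "w2 = map g2 W"
proof (rule nth_equalityI)
  show "length w2 = length (map g2 W)" by simp
  fix j assume "j < length w2"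
  then have j: "j < length W" by simp
  have "W ! j = x0 \<longleftrightarrow> j = k0" using x0_def distW j k0N lenW by (auto simp: nth_eq_iff_index_eq)
  then show "w2 ! j = map g2 W ! j" using j by (simp add: g2_def)
qed

lemma c'_eq: "c' = reshape lam w2"
  using tf unfolding tab_f_def cw_eq shape_C word_f_cw by simp

lemma len_w2: "length w2 = N" using lenW by simp

lemma rw_c': "row_word c' = w2" using c'_eq row_word_reshape len_w2 by simp
lemma shape_c': "shape c' = lam" using c'_eq shape_reshape len_w2 by simp

abbreviation "W' \<equiv> row_word T'"

lemma W'_eq: "W' = std_word w2"
proof -
  have "T' = reshape lam (std_word w2)" using T'eq unfolding std_def rw_c' shape_c' .
  moreover have "length (std_word w2) = N" using len_w2 by (simp add: std_word_def)
  ultimately show ?thesis using row_word_reshape by simp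
qed

lemma std_nth: "j < N \<Longrightarrow> W' ! j = card ({x. g2 x < g2 (W ! j)} \<inter> {1..N}) + card ({x. g2 x = g2 (W ! j)} \<inter> S (Suc j))"
proof -
  assume j: "j < N"
  have d: "distinct (take (Suc j) W)" using distW by simp
  have "W' ! j = length (filter (\<lambda>x. x < w2 ! j) w2) + length (filter (\<lambda>x. x = w2 ! j) (take (Suc j) w2))"
    unfolding W'_eq std_word_def using j len_w2 by simp
  also have "w2 ! j = g2 (W ! j)" using w2_map j lenW by simp
  also have "length (filter (\<lambda>x. x < g2 (W ! j)) w2) = card ({x. g2 x < g2 (W ! j)} \<inter> {1..N})"
    unfolding w2_map using count_map[OF distW] setW by simp
  also have "length (filter (\<lambda>x. x = g2 (W ! j)) (take (Suc j) w2)) = card ({x. g2 x = g2 (W ! j)} \<inter> S (Suc j))"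
    unfolding w2_map take_map using count_map[OF d] by simp
  finally show ?thesis .
qed

lemma std_at: "x \<in> {1..N} \<Longrightarrow> W' ! pos W x = card ({y. g2 y < g2 x} \<inter> {1..N}) + card ({y. g2 y = g2 x} \<inter> S (Suc (pos W x)))"
  using std_nth[of "pos W x"] pos_in[OF distW, of x] setW lenW by simp

lemma x0_ne_out: "x \<notin> {i'..i' + 2 * m} \<Longrightarrow> x \<noteq> x0" using x0_in p_eq by auto

lemma g2_out: "y \<notin> {i'..i' + 2 * m} \<Longrightarrow> g2 y = y"
  using x0_ne_out unfolding g2_def gam_def by auto

lemma g2_in: "y \<in> {i'..i' + 2 * m} \<Longrightarrow> g2 y = i' \<or> g2 y = Suc i'"
  unfolding g2_def gam_def by auto

lemma V1: assumes x: "x \<in> {1..N}" "x \<notin> {i'..i' + 2 * m}" shows "W' ! pos W x = x"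
proof -
  have gx: "g2 x = x" using g2_out x by simp
  have lt: "\<And>y. g2 y < x \<longleftrightarrow> y < x"
  proof -
    fix y show "g2 y < x \<longleftrightarrow> y < x"
    proof (cases "y \<in> {i'..i' + 2 * m}")
      case True
      then show ?thesis using g2_in[OF True] x m1 by auto
    next
      case False then show ?thesis using g2_out by simp
    qed
  qed
  have eq: "\<And>y. g2 y = x \<longleftrightarrow> y = x"
  proof -
    fix y show "g2 y = x \<longleftrightarrow> y = x"
    proof (cases "y \<in> {i'..i' + 2 * m}")
      case True
      then show ?thesis using g2_in[OF True] x m1 by auto
    next
      case False then show ?thesis using g2_out by simp
    qed
  qed
  have c1: "{y. g2 y < g2 x} \<inter> {1..N} = {1..<x}"
  proof (intro set_eqI)
    fix y
    have "g2 y < g2 x \<longleftrightarrow> y < x" using lt[of y] gx by simp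
    then show "y \<in> {y. g2 y < g2 x} \<inter> {1..N} \<longleftrightarrow> y \<in> {1..<x}" using x(1) by auto
  qed
  have xS: "x \<in> S (Suc (pos W x))" using pos_in_S x setW by simp
  have c2: "{y. g2 y = g2 x} \<inter> S (Suc (pos W x)) = {x}"
  proof (intro set_eqI)
    fix y
    have "g2 y = g2 x \<longleftrightarrow> y = x" using eq[of y] gx by simp
    then show "y \<in> {y. g2 y = g2 x} \<inter> S (Suc (pos W x)) \<longleftrightarrow> y \<in> {x}" using xS by auto
  qed
  show ?thesis using std_at[OF x(1)] c1 c2 x by simp
qed

lemma lt_Si_pt: "g2 y < Suc i' \<longleftrightarrow> y \<le> p \<and> y \<noteq> x0"
proof (cases "y = x0")
  case True then show ?thesis by (simp add: g2_def)
next
  case False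
  then have "g2 y = gam y" by (simp add: g2_def)
  moreover have "gam y < Suc i' \<longleftrightarrow> y \<le> p" unfolding gam_def p_eq using m1 by auto
  ultimately show ?thesis using False by simp
qed

lemma lt_Si: "{y. g2 y < Suc i'} \<inter> {1..N} = {1..p} - {x0}"
proof (intro set_eqI)
  fix y
  show "y \<in> {y. g2 y < Suc i'} \<inter> {1..N} \<longleftrightarrow> y \<in> {1..p} - {x0}"
    using lt_Si_pt[of y] pm_N by auto
qed

lemma card_lt_Si: "card ({y. g2 y < Suc i'} \<inter> {1..N}) = p - 1"
proof -
  have "x0 \<in> {1..p}" using x0_in i'1 by auto
  then show ?thesis unfolding lt_Si by simp
qed

lemma eq_Si_pt: "g2 y = Suc i' \<longleftrightarrow> y = x0 \<or> y \<in> {p + 1..p + m}"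
proof (cases "y = x0")
  case True then show ?thesis by (simp add: g2_def)
next
  case False
  then have "g2 y = gam y" by (simp add: g2_def)
  moreover have "gam y = Suc i' \<longleftrightarrow> y \<in> {p + 1..p + m}" using gam_Si by simp
  ultimately show ?thesis using False by simp
qed

lemma eq_Si: "{y. g2 y = Suc i'} = insert x0 {p + 1..p + m}"
  using eq_Si_pt by blast

definition d0 where "d0 = W' ! k0"

lemma d0_bounds: "p \<le> d0 \<and> d0 \<le> p + m"
proof -
  have "d0 = card ({y. g2 y < g2 x0} \<inter> {1..N}) + card ({y. g2 y = g2 x0} \<inter> S (Suc k0))"
    unfolding d0_def using std_nth[OF k0N] x0_def by simp
  moreover have g: "g2 x0 = Suc i'" by (simp add: g2_def)
  moreover have "x0 \<in> {y. g2 y = Suc i'} \<inter> S (Suc k0)" using g pos_in_S x0_set pos_x0 by simp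
  then have "0 < card ({y. g2 y = Suc i'} \<inter> S (Suc k0))"
    by (auto simp: card_gt_0_iff)
  moreover have "card ({y. g2 y = Suc i'} \<inter> S (Suc k0)) \<le> m + 1"
  proof -
    have "card ({y. g2 y = Suc i'} \<inter> S (Suc k0)) \<le> card (insert x0 {p + 1..p + m})"
      unfolding eq_Si by (rule card_mono) auto
    also have "\<dots> \<le> m + 1" by (simp add: card_insert_le_m1)
    finally show ?thesis .
  qed
  ultimately have "d0 = (p - 1) + card ({y. g2 y = Suc i'} \<inter> S (Suc k0))"
    "0 < card ({y. g2 y = Suc i'} \<inter> S (Suc k0))" "card ({y. g2 y = Suc i'} \<inter> S (Suc k0)) \<le> m + 1"
    using card_lt_Si by auto
  moreover have "1 \<le> p" using ap a1 by simp
  ultimately show ?thesis by linarith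
qed

lemma pos_p1_x0: "pos W (p + 1) < k0"
proof -
  have "x0 \<in> {1..N}" using x0_set setW by simp
  moreover have "x0 < T ! i ! 0" using x0_in p_row by simp
  ultimately show ?thesis using pos_rowstart_before[of i x0] il' lenT p_row pos_x0 by simp
qed

lemma p1_N: "p + 1 \<in> {1..N}" using pm_N m1 by simp

lemma V3: "W' ! pos W (p + 1) = p"
proof -
  have g: "g2 (p + 1) = Suc i'" using eq_Si_pt[of "p + 1"] m1 by simp
  have "{y. g2 y = Suc i'} \<inter> S (Suc (pos W (p + 1))) = {p + 1}"
  proof (intro set_eqI iffI)
    fix y assume y: "y \<in> {y. g2 y = Suc i'} \<inter> S (Suc (pos W (p + 1)))"
    have yW: "y \<in> set W" using y in_set_takeD by auto
    have py: "pos W y \<le> pos W (p + 1)" using y pos_in_S[OF yW] by simp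
    have yi: "y = x0 \<or> y \<in> {p + 1..p + m}" using y eq_Si_pt[of y] by simp
    show "y \<in> {p + 1}"
    proof (rule ccontr)
      assume ny: "y \<notin> {p + 1}"
      show False
      proof (cases "y = x0")
        case True then show False using py pos_p1_x0 pos_x0 by simp
      next
        case False
        then have "p + 1 < y" "y \<le> p + m" using yi ny by auto
        then have "pos W (p + 1) < pos W y" using incH Iab p_eq by simp
        then show False using py by simp
      qed
    qed
  next
    fix y assume "y \<in> {p + 1}"
    then have yy: "y = p + 1" by simp
    have "p + 1 \<in> set W" using p1_N setW by simp
    then have "p + 1 \<in> S (Suc (pos W (p + 1)))" using pos_in_S by simp
    then show "y \<in> {y. g2 y = Suc i'} \<inter> S (Suc (pos W (p + 1)))" using g yy by simp
  qed
  then show ?thesis using std_at[OF p1_N] g card_lt_Si ap a1 by simp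
qed

lemma x0_ne_a: "a = i' \<Longrightarrow> x0 \<noteq> a"
proof
  assume ai: "a = i'" and xa: "x0 = a"
  have P: "int (card ({i'..p} \<inter> S (Suc k0))) - int (card ({p + 1..p + m} \<inter> S (Suc k0))) = 1"
    using Pv_k0 Pv_cw by simp
  have "p + 1 \<in> {p + 1..p + m} \<inter> S (Suc k0)" using pos_in_S p1_N setW pos_p1_x0 m1 by simp
  then have "{p + 1..p + m} \<inter> S (Suc k0) \<noteq> {}" by blast
  then have "0 < card ({p + 1..p + m} \<inter> S (Suc k0))"
    by (simp add: card_gt_0_iff)
  then have c2: "2 \<le> card ({i'..p} \<inter> S (Suc k0))" using P by simp
  have "{i'..p} \<inter> S (Suc k0) \<subseteq> {a}"
  proof
    fix y assume y: "y \<in> {i'..p} \<inter> S (Suc k0)"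
    show "y \<in> {a}"
    proof (rule ccontr)
      assume "y \<notin> {a}"
      then have "a < y" "y \<le> p" using y ai by auto
      then have "pos W a < pos W y" using incL by simp
      moreover have "y \<in> set W" using y in_set_takeD by auto
      ultimately show False using y pos_in_S xa pos_x0 by simp
    qed
  qed
  then have "card ({i'..p} \<inter> S (Suc k0)) \<le> card {a}" by (intro card_mono) auto
  then have "card ({i'..p} \<inter> S (Suc k0)) \<le> 1" by simp
  then show False using c2 by simp
qed

lemma V4: assumes ai: "a = i'" shows "W' ! pos W a = a"
proof -
  have xa: "x0 \<noteq> a" using x0_ne_a ai by simp
  have aN: "a \<in> {1..N}" using a1 ap pm_N by simp
  have xa': "a \<noteq> x0" using xa by simp
  have g: "g2 a = i'" using xa' ai ap p_eq unfolding g2_def gam_def by simp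
  have lt: "{y. g2 y < i'} \<inter> {1..N} = {1..<i'}"
  proof (intro set_eqI)
    fix y
    have "g2 y < i' \<longleftrightarrow> y < i'"
    proof (cases "y = x0")
      case True then show ?thesis using x0_in by (simp add: g2_def)
    next
      case False
      then have "g2 y = gam y" by (simp add: g2_def)
      moreover have "gam y < i' \<longleftrightarrow> y < i'" unfolding gam_def by auto
      ultimately show ?thesis by simp
    qed
    then show "y \<in> {y. g2 y < i'} \<inter> {1..N} \<longleftrightarrow> y \<in> {1..<i'}" using pm_N p_eq by auto
  qed
  have eq: "{y. g2 y = i'} \<inter> S (Suc (pos W a)) = {a}"
  proof (intro set_eqI iffI)
    fix y assume y: "y \<in> {y. g2 y = i'} \<inter> S (Suc (pos W a))"
    then have yW: "y \<in> set W" using in_set_takeD by auto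
    have gy: "g2 y = i'" using y by simp
    have "y \<in> {i'..p}"
    proof (cases "y = x0")
      case True then show ?thesis using gy by (simp add: g2_def)
    next
      case False
      then have "gam y = i'" using gy by (simp add: g2_def)
      then show ?thesis using gam_i by simp
    qed
    moreover have "pos W y \<le> pos W a" using y pos_in_S[OF yW] by simp
    ultimately show "y \<in> {a}"
    proof -
      assume yi: "y \<in> {i'..p}" and py: "pos W y \<le> pos W a"
      show ?thesis
      proof (rule ccontr)
        assume "y \<notin> {a}"
        then have "a < y" "y \<le> p" using yi ai by auto
        then have "pos W a < pos W y" using incL by simp
        then show False using py by simp
      qed
    qed
  next
    fix y assume "y \<in> {a}"
    then show "y \<in> {y. g2 y = i'} \<inter> S (Suc (pos W a))" using g pos_in_S aN setW by simp
  qed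
  show ?thesis using std_at[OF aN] g lt eq ai i'1 by simp
qed

end

context ctx begin

lemma csvT': "csv lam T'"
  using T'v part unfolding CS_vert_def by unfold_locales auto

lemma T'_entry: assumes r: "r < nr" shows "T' ! r ! 0 = W' ! pos W (T ! r ! 0)"
proof -
  interpret T2: csv lam T' by (rule csvT')
  have r1: "r < length T'" "0 < length (T' ! r)" using r T2.lenT T2.row_pos by auto
  have "T' ! r ! 0 = W' ! rstart T' r" using row_word_nth[OF r1] by simp
  also have "rstart T' r = rstart T r" using rstart_shape T2.shapeT shapeT by simp
  also have "rstart T r = pos W (T ! r ! 0)" using entry_pos[of r 0] r lenT row_pos by simp
  finally show ?thesis .
qed

lemma NoD: assumes pmq: "p + m < q" and d: "p \<le> d" "d \<le> p + m" shows "d \<notin> descents T'"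
proof
  interpret T2: csv lam T' by (rule csvT')
  assume "d \<in> descents T'"
  then obtain r where r: "1 \<le> r" "r < nr" "d = T' ! r ! 0 - 1" using T2.desc_set by auto
  define y where "y = T ! r ! 0"
  have y1: "1 \<le> y" "y \<le> N" using entry_ge1 row_pos r lenT y_def by auto
  have ysd: "y = sd r + 1" using sd_row[of r] r y1 y_def by simp
  have yN: "y \<in> {1..N}" using y1 by simp
  have dy: "d = W' ! pos W y - 1" using T'_entry r y_def by simp
  show False
  proof (cases "y \<in> {i'..i' + 2 * m}")
    case False
    then have "d = sd r" using V1[OF yN False] dy ysd by simp
    then have "sd i \<le> sd r" "sd r < sd (i + 1)" using d pmq unfolding p_def q_def by auto
    then have "i \<le> r" "r < i + 1" using sd_lt_iff[of r "i + 1"] sd_strict[of r i] il' by (auto simp: not_less[symmetric])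
    then have "r = i" by simp
    then have "y = p + 1" using ysd p_def by simp
    then show False using False p_eq m1 by simp
  next
    case True
    then have "a \<le> y" "y \<le> q" using Iab by auto
    then have "sd (i - 1) \<le> sd r" "sd r < sd (i + 1)" using ysd unfolding a_def q_def by auto
    then have ri2: "r < i + 1" using sd_lt_iff[of r "i + 1"] il' by simp
    have ri1: "i - 1 \<le> r"
    proof (rule ccontr)
      assume "\<not> i - 1 \<le> r"
      then have "sd r < sd (i - 1)" using sd_strict[of r "i - 1"] il' by simp
      then show False using \<open>sd (i - 1) \<le> sd r\<close> by simp
    qed
    have ri: "i - 1 \<le> r" "r < i + 1" using ri1 ri2 by auto
    show False
    proof (cases "r = i")
      case True
      then have "y = p + 1" using ysd p_def by simp
      then have "d = p - 1" using dy V3 by simp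
      then show False using d ap a1 by simp
    next
      case False
      then have "r = i - 1" using ri by simp
      then have ya: "y = a" using ysd a_def by simp
      then have "a = i'" using True Iab by simp
      then have "d = a - 1" using dy V4 ya by simp
      then show False using d ap a1 by simp
    qed
  qed
qed

lemma k0_lt: assumes pmq: "p + m < q" shows "k0 < pos W (p + m + 1)"
proof -
  interpret T2: csv lam T' by (rule csvT')
  have db: "p \<le> d0" "d0 \<le> p + m" using d0_bounds by auto
  have p1: "1 \<le> p" using ap a1 by simp
  have ch: "\<And>d. d0 \<le> d \<Longrightarrow> d < p + m + 1 \<Longrightarrow> \<not> rowof T' d < rowof T' (Suc d)"
  proof -
    fix d assume "d0 \<le> d" "d < p + m + 1"
    then have "p \<le> d" "d \<le> p + m" using db by auto
    then have "d \<notin> descents T'" using NoD pmq by simp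
    moreover have "1 \<le> d" "d < length W'" using \<open>p \<le> d\<close> \<open>d \<le> p + m\<close> p1 pmq qN T2.lenW by auto
    ultimately show "\<not> rowof T' d < rowof T' (Suc d)" unfolding descents_def by auto
  qed
  have "pos W' d0 < pos W' (p + m + 1)"
    using T2.nondesc_chain[OF ch] db p1 pmq qN by simp
  moreover have "pos W' d0 = k0" unfolding d0_def using pos_nth[OF T2.distW] k0N T2.lenW by simp
  moreover have "pos W' (p + m + 1) = pos W (p + m + 1)"
  proof -
    have z: "p + m + 1 \<in> {1..N}" "p + m + 1 \<notin> {i'..i' + 2 * m}" using pmq qN p_eq by auto
    have "pos W (p + m + 1) < length W'" using pos_in[OF distW, of "p + m + 1"] z setW lenW T2.lenW by simp
    then show ?thesis using V1[OF z] pos_nth[OF T2.distW] by metis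
  qed
  ultimately show ?thesis by simp
qed

end

lemma Fm_le: "(\<And>j. j \<le> length xs \<Longrightarrow> Pv i (take j xs) \<le> B) \<Longrightarrow> Fm i xs \<le> B"
  unfolding Fm_def by (rule Max.boundedI) auto

context ctx begin

definition beta where "beta = blockof (Des T)"

lemma b_i: "x \<in> {1..N} \<Longrightarrow> beta x = i \<longleftrightarrow> x \<in> {a..p}"
  using blockof_iff[of x i] i1 blk_i unfolding beta_def by simp

lemma b_i1: "x \<in> {1..N} \<Longrightarrow> beta x = Suc i \<longleftrightarrow> x \<in> {p + 1..q}"
  using blockof_iff[of x "i + 1"] blk_i1 unfolding beta_def by simp

lemma Pv_v: "Pv i (take j (map beta W)) = int (card ({a..p} \<inter> S j)) - int (card ({p + 1..q} \<inter> S j))"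
proof -
  have "{x. beta x = i} \<inter> S j = {a..p} \<inter> S j" using b_i S_sub by blast
  moreover have "{x. beta x = Suc i} \<inter> S j = {p + 1..q} \<inter> S j" using b_i1 S_sub by blast
  ultimately show ?thesis using Pv_take[of i j beta] by simp
qed

lemma split_card: "card ({a..p} \<inter> S j) = card ({a..<i'} \<inter> S j) + card ({i'..p} \<inter> S j)"
proof -
  have "{a..p} \<inter> S j = ({a..<i'} \<inter> S j) \<union> ({i'..p} \<inter> S j)" using Iab p_eq by auto
  moreover have "({a..<i'} \<inter> S j) \<inter> ({i'..p} \<inter> S j) = {}" by auto
  ultimately show ?thesis by (simp add: card_Un_disjoint)
qed

lemma upper: "j \<le> N \<Longrightarrow> Pv i (take j (map beta W)) \<le> int (i' - a) + 1"
proof -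
  assume j: "j \<le> N"
  have c: "Pv i' (take j cw) \<le> 1" using Fm_ge[of j cw i'] Fm_cw j lenW by simp
  have c1: "card ({a..<i'} \<inter> S j) \<le> i' - a"
    using card_mono[of "{a..<i'}" "{a..<i'} \<inter> S j"] by simp
  have c2: "card ({p + 1..p + m} \<inter> S j) \<le> card ({p + 1..q} \<inter> S j)"
    using Iab p_eq by (intro card_mono) auto
  show ?thesis using Pv_v[of j] Pv_cw[of j] split_card[of j] c c1 c2 by linarith
qed

lemma L_in: "{a..<i'} \<inter> S (Suc k0) = {a..<i'}"
proof -
  have "\<And>y. y \<in> {a..<i'} \<Longrightarrow> y \<in> S (Suc k0)"
  proof -
    fix y assume y: "y \<in> {a..<i'}"
    then have "pos W y < pos W x0" using incL x0_in by simp
    moreover have "y \<in> set W" using y setW a1 pm_N p_eq by auto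
    ultimately show "y \<in> S (Suc k0)" using pos_in_S pos_x0 by simp
  qed
  then show ?thesis by blast
qed

lemma H_out: "{p + 1..q} \<inter> S (Suc k0) = {p + 1..p + m} \<inter> S (Suc k0)"
proof -
  have "\<And>z. z \<in> {p + m + 1..q} \<Longrightarrow> z \<notin> S (Suc k0)"
  proof -
    fix z assume z: "z \<in> {p + m + 1..q}"
    then have pmq: "p + m < q" by simp
    have "pos W (p + m + 1) \<le> pos W z"
    proof (cases "z = p + m + 1")
      case True then show ?thesis by simp
    next
      case False then show ?thesis using incH z by (simp add: less_imp_le)
    qed
    then have "k0 < pos W z" using k0_lt[OF pmq] by simp
    moreover have "z \<in> set W" using z setW qN pm_N by auto
    ultimately show "z \<notin> S (Suc k0)" using pos_in_S by simp
  qed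
  show ?thesis
  proof (intro set_eqI iffI)
    fix z assume z: "z \<in> {p + 1..q} \<inter> S (Suc k0)"
    show "z \<in> {p + 1..p + m} \<inter> S (Suc k0)"
    proof (cases "z \<le> p + m")
      case True then show ?thesis using z by simp
    next
      case False
      then have "z \<in> {p + m + 1..q}" using z by simp
      then show ?thesis using z \<open>\<And>z. z \<in> {p + m + 1..q} \<Longrightarrow> z \<notin> S (Suc k0)\<close> by blast
    qed
  next
    fix z assume "z \<in> {p + 1..p + m} \<inter> S (Suc k0)"
    then show "z \<in> {p + 1..q} \<inter> S (Suc k0)" using Iab p_eq by auto
  qed
qed

lemma lower: "Pv i (take (Suc k0) (map beta W)) = int (i' - a) + 1"
proof -
  have "card ({a..<i'} \<inter> S (Suc k0)) = i' - a" using L_in by simp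
  then show ?thesis using Pv_v[of "Suc k0"] Pv_cw[of "Suc k0"] split_card[of "Suc k0"] H_out Pv_k0 by simp
qed

lemma Fm_v: "Fm i (map beta W) = int (i' - a) + 1"
proof (rule antisym)
  show "Fm i (map beta W) \<le> int (i' - a) + 1" using upper lenW by (intro Fm_le) simp
  show "int (i' - a) + 1 \<le> Fm i (map beta W)" using Fm_ge[of "Suc k0" "map beta W" i] lower k0N lenW by simp
qed

lemma Pv_full: "Pv i (map beta W) = int (p - a + 1) - int (q - p)"
proof -
  have "take N (map beta W) = map beta W" using lenW by simp
  moreover have "{a..p} \<inter> S N = {a..p}" "{p + 1..q} \<inter> S N = {p + 1..q}" using SN a1 qN pq ap by auto
  ultimately show ?thesis using Pv_v[of N] ap by simp
qed

lemma final:
  "phi i (map (map beta) T) = i' - a + 1 \<and> eps i (map (map beta) T) = q - (i' + 2 * m)"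
proof -
  have rw: "row_word (map (map beta) T) = map beta W" by (rule row_word_map)
  have f: "int (phi i (map (map beta) T)) = int (i' - a) + 1"
    unfolding phi_brk rw using brk_Fm[of i "map beta W"] Fm_v by simp
  have e: "int (eps i (map (map beta) T)) = int (i' - a) + 1 - (int (p - a + 1) - int (q - p))"
    unfolding eps_brk rw using brk_Fm[of i "map beta W"] Fm_v Pv_full by simp
  have "int (eps i (map (map beta) T)) = int (q - (i' + 2 * m))"
    using e Iab ap pq p_eq by simp
  then show ?thesis using f by simp
qed

end

theorem corollary4p39:
  fixes lam :: "nat list" and T T' :: "nat list list" and I :: "nat set" and i :: nat
  assumes "partition lam"
    and "T \<in> CS_vert lam"
    and "CS_edge lam T I T'"
    and "1 \<le> i" and "i + 1 \<le> length (Des T)"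
    and "I \<subseteq> comp_block (Des T) i \<union> comp_block (Des T) (i + 1)"
  shows "phi i (map (map (blockof (Des T))) T) = Min I - Min (comp_block (Des T) i) + 1
       \<and> eps i (map (map (blockof (Des T))) T) = Max (comp_block (Des T) (i + 1)) - Max I"
proof -
  have T'v: "T' \<in> CS_vert lam" and ce: "cs_edge lam T I T'" using assms(3) unfolding CS_edge_def by auto
  obtain i' m c' where Ieq: "I = {i'..i' + 2 * m}" and dy: "dyck_pattern (row_word T) i' m"
    and tf: "tab_f i' (dyck_collapse i' m T) = Some c'" and T'eq: "T' = std c'"
    using ce unfolding cs_edge_def by blast
  have Tv: "T \<in> SYT lam" "length (Des T) = length lam" using assms(2) unfolding CS_vert_def by auto
  interpret ctx lam T T' I i i' m c'
  proof unfold_locales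
    show "Defs.partition lam" using assms(1) .
    show "T \<in> SYT lam" using Tv(1) .
    show "length (Des T) = length lam" using Tv(2) .
    show "T' \<in> CS_vert lam" using T'v .
    show "1 \<le> i" using assms(4) .
    show "i + 1 \<le> length (Des T)" using assms(5) .
    show "I \<subseteq> comp_block (Des T) i \<union> comp_block (Des T) (i + 1)" using assms(6) .
    show "I = {i'..i' + 2 * m}" using Ieq .
    show "dyck_pattern (row_word T) i' m" using dy .
    show "tab_f i' (dyck_collapse i' m T) = Some c'" using tf .
    show "T' = std c'" using T'eq .
  qed
  have "Min I = i'" unfolding Ieq by (rule Min_eqI) auto
  moreover have "Max I = i' + 2 * m" unfolding Ieq by (rule Max_eqI) auto
  moreover have "Min (comp_block (Des T) i) = a" unfolding blk_i by (rule Min_eqI) (use ap in auto)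
  moreover have "Max (comp_block (Des T) (i + 1)) = q" unfolding blk_i1 by (rule Max_eqI) (use pq in auto)
  ultimately show ?thesis using final unfolding beta_def by simp
qed

end
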